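(* Let $\Phi$ be the one-hidden-layer objective and $G^\Phi$ the associated map. Set $\rho_x=\max_{i\in[n]}\|x^i\|_{p_u'}$, $C_w=\rho_w\Psi^\alpha_{p_w',p_u}(\mathbf{1},\rho_u\rho_x)$ and $C_u=\rho_w\Psi^\alpha_{p_w',p_u}(\alpha,\rho_u\rho_x)$. Let $$A=2\,\mathrm{diag}(p_w'-1,\dots,p_w'-1,p_u'-1)\begin{pmatrix}2C_w\mathbf{1}\mathbf{1}^T & (2C_u+\|\alpha\|_\infty)\mathbf{1}\\ (2C_w+1)\mathbf{1}^T & 2C_u+\|\alpha\|_\infty-1\end{pmatrix}\in\mathbb{R}^{(K+1)\times(K+1)},$$ with $\mathbf{1}\in\mathbb{R}^K$ the all-ones vector. Then for $F=G^\Phi$, for all $i,k\in[K]$, $j,a\in[n_1]$, $b\in[d]$ and $(w,u)\in B_{++}$: $$\langle|\nabla_{w_k}F_{w_{i,j}}|,w_k\rangle\le A_{i,k}F_{w_{i,j}},\ \langle|\nabla_u F_{w_{i,j}}|,u\rangle\le A_{i,K+1}F_{w_{i,j}},\ \langle|\nabla_{w_k}F_{u_{ab}}|,w_k\rangle\le A_{K+1,k}F_{u_{ab}},\ \langle|\nabla_u F_{u_{ab}}|,u\rangle\le A_{K+1,K+1}F_{u_{ab}}.$$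
   Context: Setting: data $(x^i,y_i)\in\mathbb{R}^d_+\times[K]$, $i\in[n]$; $w\in\mathbb{R}^{K\times n_1}_+$ with rows $w_1,\dots,w_K$, $u\in\mathbb{R}^{n_1\times d}_+$; $\alpha\in\mathbb{R}^{n_1}$ with $\alpha_l\ge1$; $f_r(w,u)(x)=\sum_{l=1}^{n_1}w_{r,l}(\sum_{m=1}^d u_{lm}x_m)^{\alpha_l}$; $L(y,f(x))=-f_y(x)+\log\sum_{j}e^{f_j(x)}$; for $\epsilon>0$, $\Phi(w,u)=\frac1n\sum_i[-L(y_i,f(w,u)(x^i))+\sum_r f_r(w,u)(x^i)]+\epsilon(\sum_{r,l}w_{r,l}+\sum_{l,m}u_{lm})$. Given $p_w,p_u\in(1,\infty)$, $\rho_w,\rho_u>0$: $B_{++}=\{(w,u)\in\mathbb{R}^{K\times n_1}_{++}\times\mathbb{R}^{n_1\times d}_{++}:\|u\|_{p_u}\le\rho_u,\ \|w_i\|_{p_w}\le\rho_w\ \forall i\}$ (entrywise norms). $p'=p/(p-1)$, $\psi_p(z)=\operatorname{sign}(z)|z|^{p-1}$ componentwise, and $G^{\Phi}(w,u)=\big(\tfrac{\rho_w\psi_{p_w'}(\nabla_{w_1}\Phi)}{\|\psi_{p_w'}(\nabla_{w_1}\Phi)\|_{p_w}},\dots,\tfrac{\rho_w\psi_{p_w'}(\nabla_{w_K}\Phi)}{\|\psi_{p_w'}(\nabla_{w_K}\Phi)\|_{p_w}},\tfrac{\rho_u\psi_{p_u'}(\nabla_u\Phi)}{\|\psi_{p_u'}(\nabla_u\Phi)\|_{p_u}}\big)(w,u)$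 with components $F_{w_{i,j}},F_{u_{ab}}$. $\Psi^\alpha_{p,q}(\delta,t)=\big([\sum_{l\in J}(\delta_lt^{\alpha_l})^{pq/(q-\bar\alpha p)}]^{1-\bar\alpha p/q}+\max_{j\in J^c}(\delta_jt^{\alpha_j})^p\big)^{1/p}$ with $J=\{l:\alpha_lp<q\}$, $J^c=\{l:\alpha_lp\ge q\}$, $\bar\alpha=\min_{l\in J}\alpha_l$, empty sums/maxima $=0$; $\mathbf{1}$ in $\Psi^\alpha(\mathbf{1},\cdot)$ is the all-ones vector of $\mathbb{R}^{n_1}$. $|\cdot|$ entrywise absolute value, $\langle\cdot,\cdot\rangle$ Frobenius inner product. *)

theory Defs
  imports "HOL-Analysis.Analysis"
begin

text \<open>Conventions: all indices are 0-based. Classes r < K, hidden units l < n1,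
 input coordinates m < d, samples i < n.  Weights are w :: nat => nat => real
 (w r l = w_{r,l}), u :: nat => nat => real (u l m = u_{lm}); data x i m = x^i_m,
 labels y i.\<close>

definition hconj :: "real \<Rightarrow> real" where
  "hconj p = p / (p - 1)"

definition psi :: "real \<Rightarrow> real \<Rightarrow> real" where
  "psi p z = sgn z * \<bar>z\<bar> powr (p - 1)"

definition fnet :: "nat \<Rightarrow> nat \<Rightarrow> (nat \<Rightarrow> real) \<Rightarrow> (nat \<Rightarrow> nat \<Rightarrow> real)
    \<Rightarrow> (nat \<Rightarrow> nat \<Rightarrow> real) \<Rightarrow> (nat \<Rightarrow> real) \<Rightarrow> nat \<Rightarrow> real" where
  "fnet n1 d \<alpha> w u xv r = (\<Sum>l<n1. w r l * (\<Sum>m<d. u l m * xv m) powr \<alpha> l)"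

definition xent :: "nat \<Rightarrow> nat \<Rightarrow> (nat \<Rightarrow> real) \<Rightarrow> real" where
  "xent K yy fv = - fv yy + ln (\<Sum>j<K. exp (fv j))"

definition PhiObj :: "nat \<Rightarrow> nat \<Rightarrow> nat \<Rightarrow> nat \<Rightarrow> (nat \<Rightarrow> nat \<Rightarrow> real) \<Rightarrow> (nat \<Rightarrow> nat)
    \<Rightarrow> (nat \<Rightarrow> real) \<Rightarrow> real \<Rightarrow> (nat \<Rightarrow> nat \<Rightarrow> real) \<Rightarrow> (nat \<Rightarrow> nat \<Rightarrow> real) \<Rightarrow> real" where
  "PhiObj K n1 d n x y \<alpha> \<epsilon> w u =
     (1 / real n) * (\<Sum>i<n. - xent K (y i) (fnet n1 d \<alpha> w u (x i))
                              + (\<Sum>r<K. fnet n1 d \<alpha> w u (x i) r))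
     + \<epsilon> * ((\<Sum>r<K. \<Sum>l<n1. w r l) + (\<Sum>l<n1. \<Sum>m<d. u l m))"

definition dW :: "((nat \<Rightarrow> nat \<Rightarrow> real) \<Rightarrow> (nat \<Rightarrow> nat \<Rightarrow> real) \<Rightarrow> real)
    \<Rightarrow> (nat \<Rightarrow> nat \<Rightarrow> real) \<Rightarrow> (nat \<Rightarrow> nat \<Rightarrow> real) \<Rightarrow> nat \<Rightarrow> nat \<Rightarrow> real" where
  "dW F w u r l = deriv (\<lambda>t. F (w(r := (w r)(l := t))) u) (w r l)"

definition dU :: "((nat \<Rightarrow> nat \<Rightarrow> real) \<Rightarrow> (nat \<Rightarrow> nat \<Rightarrow> real) \<Rightarrow> real)
    \<Rightarrow> (nat \<Rightarrow> nat \<Rightarrow> real) \<Rightarrow> (nat \<Rightarrow> nat \<Rightarrow> real) \<Rightarrow> nat \<Rightarrow> nat \<Rightarrow> real" where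
  "dU F w u a b = deriv (\<lambda>t. F w (u(a := (u a)(b := t)))) (u a b)"

definition GW :: "((nat \<Rightarrow> nat \<Rightarrow> real) \<Rightarrow> (nat \<Rightarrow> nat \<Rightarrow> real) \<Rightarrow> real) \<Rightarrow> nat
    \<Rightarrow> real \<Rightarrow> real \<Rightarrow> nat \<Rightarrow> nat \<Rightarrow> (nat \<Rightarrow> nat \<Rightarrow> real) \<Rightarrow> (nat \<Rightarrow> nat \<Rightarrow> real) \<Rightarrow> real" where
  "GW F n1 \<rho>w pw i j w u =
     \<rho>w * psi (hconj pw) (dW F w u i j)
       / (\<Sum>l<n1. \<bar>psi (hconj pw) (dW F w u i l)\<bar> powr pw) powr (1 / pw)"

definition GU :: "((nat \<Rightarrow> nat \<Rightarrow> real) \<Rightarrow> (nat \<Rightarrow> nat \<Rightarrow> real) \<Rightarrow> real) \<Rightarrow> nat \<Rightarrow> nat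
    \<Rightarrow> real \<Rightarrow> real \<Rightarrow> nat \<Rightarrow> nat \<Rightarrow> (nat \<Rightarrow> nat \<Rightarrow> real) \<Rightarrow> (nat \<Rightarrow> nat \<Rightarrow> real) \<Rightarrow> real" where
  "GU F n1 d \<rho>u pu a b w u =
     \<rho>u * psi (hconj pu) (dU F w u a b)
       / (\<Sum>l<n1. \<Sum>m<d. \<bar>psi (hconj pu) (dU F w u l m)\<bar> powr pu) powr (1 / pu)"

definition Bpp :: "nat \<Rightarrow> nat \<Rightarrow> nat \<Rightarrow> real \<Rightarrow> real \<Rightarrow> real \<Rightarrow> real
    \<Rightarrow> ((nat \<Rightarrow> nat \<Rightarrow> real) \<times> (nat \<Rightarrow> nat \<Rightarrow> real)) set" where
  "Bpp K n1 d pw pu \<rho>w \<rho>u = {(w, u).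
     (\<forall>r<K. \<forall>l<n1. 0 < w r l) \<and> (\<forall>l<n1. \<forall>m<d. 0 < u l m) \<and>
     (\<Sum>l<n1. \<Sum>m<d. \<bar>u l m\<bar> powr pu) powr (1 / pu) \<le> \<rho>u \<and>
     (\<forall>r<K. (\<Sum>l<n1. \<bar>w r l\<bar> powr pw) powr (1 / pw) \<le> \<rho>w)}"

definition PsiA :: "nat \<Rightarrow> (nat \<Rightarrow> real) \<Rightarrow> real \<Rightarrow> real \<Rightarrow> (nat \<Rightarrow> real) \<Rightarrow> real \<Rightarrow> real" where
  "PsiA n1 \<alpha> p q \<delta> t =
    (let J = {l. l < n1 \<and> \<alpha> l * p < q};
         Jc = {l. l < n1 \<and> q \<le> \<alpha> l * p};
         ab = Min (\<alpha> ` J)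
     in ((\<Sum>l\<in>J. (\<delta> l * t powr \<alpha> l) powr (p * q / (q - ab * p))) powr (1 - ab * p / q)
         + (if Jc = {} then 0 else Max ((\<lambda>j. (\<delta> j * t powr \<alpha> j) powr p) ` Jc))) powr (1 / p))"

definition rhoX :: "nat \<Rightarrow> nat \<Rightarrow> (nat \<Rightarrow> nat \<Rightarrow> real) \<Rightarrow> real \<Rightarrow> real" where
  "rhoX n d x pu = Max ((\<lambda>i. (\<Sum>m<d. \<bar>x i m\<bar> powr hconj pu) powr (1 / hconj pu)) ` {..<n})"

text \<open>The matrix A, indices 0..K (index K is the last row/column, i.e. K+1 in the paper).\<close>
definition Amat :: "nat \<Rightarrow> real \<Rightarrow> real \<Rightarrow> real \<Rightarrow> real \<Rightarrow> real \<Rightarrow> nat \<Rightarrow> nat \<Rightarrow> real" where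
  "Amat K pw pu Cw Cu an i k =
     2 * (if i < K then hconj pw - 1 else hconj pu - 1) *
     (if i < K \<and> k < K then 2 * Cw
      else if i < K then 2 * Cu + an
      else if k < K then 2 * Cw + 1
      else 2 * Cu + an - 1)"

end

theory Submission
  imports Defs
begin

lemma hconj_facts: assumes "1 < p" shows "1/p + 1/hconj p = 1" "1 < hconj p" "(hconj p - 1) * p = hconj p" "hconj p / p = hconj p - 1"
  using assms by (auto simp: hconj_def field_simps)

lemma holder_sum:
  fixes a b :: "'i \<Rightarrow> real"
  assumes fin: "finite I" and a0: "\<forall>i\<in>I. 0 \<le> a i" and b0: "\<forall>i\<in>I. 0 \<le> b i"
    and p: "1 < p" and q: "1 < q" and pq: "1/p + 1/q = 1"
  shows "(\<Sum>i\<in>I. a i * b i) \<le> (\<Sum>i\<in>I. a i powr p) powr (1/p) * (\<Sum>i\<in>I. b i powr q) powr (1/q)"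
proof -
  define SA where "SA = (\<Sum>i\<in>I. a i powr p)"
  define SB where "SB = (\<Sum>i\<in>I. b i powr q)"
  have SA0: "0 \<le> SA" unfolding SA_def by (simp add: sum_nonneg)
  have SB0: "0 \<le> SB" unfolding SB_def by (simp add: sum_nonneg)
  show ?thesis
  proof (cases "SA = 0 \<or> SB = 0")
    case True
    then have "(\<forall>i\<in>I. a i = 0) \<or> (\<forall>i\<in>I. b i = 0)"
      unfolding SA_def SB_def using fin a0 b0
      by (subst (asm) sum_nonneg_eq_0_iff; auto)+
    then have "(\<Sum>i\<in>I. a i * b i) = 0" by auto
    then show ?thesis by (simp add: SA_def[symmetric] SB_def[symmetric])
  next
    case False
    then have SAp: "0 < SA" and SBp: "0 < SB" using SA0 SB0 by auto
    define A where "A = SA powr (1/p)"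
    define B where "B = SB powr (1/q)"
    have Ap: "0 < A" "A powr p = SA" unfolding A_def using SAp p by (auto simp: powr_powr)
    have Bp: "0 < B" "B powr q = SB" unfolding B_def using SBp q by (auto simp: powr_powr)
    have yi: "a i / A * (b i / B) \<le> (a i / A) powr p / p + (b i / B) powr q / q" if "i \<in> I" for i
      by (rule Youngs_inequality) (use p q pq a0 b0 that Ap Bp in auto)
    have "(\<Sum>i\<in>I. a i / A * (b i / B)) \<le> (\<Sum>i\<in>I. (a i / A) powr p / p + (b i / B) powr q / q)"
      by (rule sum_mono) (use yi in auto)
    also have "\<dots> = (\<Sum>i\<in>I. a i powr p) / SA / p + (\<Sum>i\<in>I. b i powr q) / SB / q"
      using a0 b0 Ap Bp by (simp add: sum.distrib powr_divide sum_divide_distrib)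
    also have "\<dots> = 1" using SAp SBp pq by (simp add: SA_def[symmetric] SB_def[symmetric])
    finally have "(\<Sum>i\<in>I. a i * b i) / (A * B) \<le> 1"
      by (simp add: sum_divide_distrib mult.commute mult.left_commute)
    then have "(\<Sum>i\<in>I. a i * b i) \<le> A * B" using Ap Bp by (simp add: divide_le_eq)
    then show ?thesis by (simp add: A_def B_def SA_def SB_def)
  qed
qed

lemma quot_deriv:
  fixes g :: "'i \<Rightarrow> real \<Rightarrow> real" and g' :: "'i \<Rightarrow> real"
  assumes fin: "finite I" and jI: "j \<in> I" and p: "1 < p"
    and dg: "\<forall>l\<in>I. (g l has_real_derivative g' l) (at t0)"
    and gp: "\<forall>l\<in>I. 0 < g l t0"
  shows "((\<lambda>t. \<rho> * psi (hconj p) (g j t) / (\<Sum>l\<in>I. \<bar>psi (hconj p) (g l t)\<bar> powr p) powr (1/p))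
     has_real_derivative
      (\<rho> * psi (hconj p) (g j t0) / (\<Sum>l\<in>I. \<bar>psi (hconj p) (g l t0)\<bar> powr p) powr (1/p))
      * (hconj p - 1) * (g' j / g j t0 - (\<Sum>l\<in>I. (g l t0 powr hconj p / (\<Sum>l'\<in>I. g l' t0 powr hconj p)) * (g' l / g l t0)))) (at t0)"
proof -
  define q where "q = hconj p"
  have q1: "1 < q" and qp: "(q - 1) * p = q" and qp2: "q / p = q - 1" using hconj_facts[OF p] by (auto simp: q_def)
  have Ine: "I \<noteq> {}" using jI by auto
  have ev: "eventually (\<lambda>t. \<forall>l\<in>I. 0 < g l t) (nhds t0)"
  proof (rule eventually_ball_finite[OF fin], intro ballI)
    fix l assume "l \<in> I"
    then have "isCont (g l) t0" using dg DERIV_continuous by blast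
    then show "eventually (\<lambda>t. 0 < g l t) (nhds t0)"
      using gp \<open>l \<in> I\<close> by (simp add: continuous_at tendsto_at_iff_tendsto_nhds order_tendstoD)
  qed
  define N where "N = (\<lambda>t. \<rho> * exp ((q - 1) * ln (g j t) - (1/p) * ln (\<Sum>l\<in>I. exp (q * ln (g l t)))))"
  have eqN: "\<rho> * psi q (g j t) / (\<Sum>l\<in>I. \<bar>psi q (g l t)\<bar> powr p) powr (1/p) = N t"
    if "\<forall>l\<in>I. 0 < g l t" for t
  proof -
    have e1: "psi q (g l t) = exp ((q - 1) * ln (g l t))" if "l \<in> I" for l
      using \<open>\<forall>l\<in>I. 0 < g l t\<close> that by (auto simp: psi_def powr_def)
    have e2: "\<bar>psi q (g l t)\<bar> powr p = exp (q * ln (g l t))" if "l \<in> I" for l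
      using e1[OF that] qp by (simp add: powr_def mult.commute)
    have sp: "0 < (\<Sum>l\<in>I. exp (q * ln (g l t)))" using fin Ine by (simp add: sum_pos)
    have e3: "(\<Sum>l\<in>I. \<bar>psi q (g l t)\<bar> powr p) = (\<Sum>l\<in>I. exp (q * ln (g l t)))"
      by (rule sum.cong) (auto simp: e2)
    show ?thesis unfolding N_def e3 using e1[OF jI] sp
      by (simp add: powr_def exp_diff)
  qed
  have S0: "0 < (\<Sum>l\<in>I. exp (q * ln (g l t0)))" using fin Ine by (simp add: sum_pos)
  have dN: "(N has_real_derivative N t0 * ((q - 1) * (g' j / g j t0) - (1/p) * ((\<Sum>l\<in>I. exp (q * ln (g l t0)) * (q * (g' l / g l t0))) / (\<Sum>l\<in>I. exp (q * ln (g l t0)))))) (at t0)"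
    unfolding N_def
    using gp jI dg fin Ine p S0
    by (auto intro!: derivative_eq_intros DERIV_sum S0 simp: field_simps)
  have pw: "g l t0 powr q = exp (q * ln (g l t0))" if "l \<in> I" for l
    using gp that by (auto simp: powr_def)
  have sw: "(\<Sum>l\<in>I. g l t0 powr q) = (\<Sum>l\<in>I. exp (q * ln (g l t0)))"
    by (rule sum.cong) (auto simp: pw)
  define S where "S = (\<Sum>l\<in>I. exp (q * ln (g l t0)))"
  have sw2: "(\<Sum>l\<in>I. (g l t0 powr q / (\<Sum>l'\<in>I. g l' t0 powr q)) * (g' l / g l t0))
     = (\<Sum>l\<in>I. exp (q * ln (g l t0)) * (g' l / g l t0)) / S"
    unfolding sw S_def[symmetric] sum_divide_distrib by (rule sum.cong) (auto simp: pw)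
  have sw3: "(\<Sum>l\<in>I. exp (q * ln (g l t0)) * (q * (g' l / g l t0))) = q * (\<Sum>l\<in>I. exp (q * ln (g l t0)) * (g' l / g l t0))"
    by (simp add: sum_distrib_left algebra_simps)
  have val: "N t0 * ((q - 1) * (g' j / g j t0) - (1/p) * ((\<Sum>l\<in>I. exp (q * ln (g l t0)) * (q * (g' l / g l t0))) / (\<Sum>l\<in>I. exp (q * ln (g l t0)))))
     = N t0 * (q - 1) * (g' j / g j t0 - (\<Sum>l\<in>I. (g l t0 powr q / (\<Sum>l'\<in>I. g l' t0 powr q)) * (g' l / g l t0)))"
  proof -
    define Z where "Z = (\<Sum>l\<in>I. exp (q * ln (g l t0)) * (g' l / g l t0))"
    have h: "(1/p) * (q * Z / S) = (q - 1) * (Z / S)" by (simp add: qp2[symmetric])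
    show ?thesis unfolding sw2 sw3 S_def[symmetric] Z_def[symmetric] h by (simp add: algebra_simps diff_divide_distrib)
  qed
  have ev2: "eventually (\<lambda>t. \<rho> * psi q (g j t) / (\<Sum>l\<in>I. \<bar>psi q (g l t)\<bar> powr p) powr (1/p) = N t) (nhds t0)"
    using ev by (rule eventually_mono) (rule eqN)
  have "((\<lambda>t. \<rho> * psi q (g j t) / (\<Sum>l\<in>I. \<bar>psi q (g l t)\<bar> powr p) powr (1/p)) has_real_derivative
      N t0 * (q - 1) * (g' j / g j t0 - (\<Sum>l\<in>I. (g l t0 powr q / (\<Sum>l'\<in>I. g l' t0 powr q)) * (g' l / g l t0)))) (at t0)"
    by (subst DERIV_cong_ev[OF refl ev2 refl]) (use dN val in metis)
  then show ?thesis using eqN[of t0] gp unfolding q_def by simp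

qed

lemma sum_swap3: "(\<Sum>c\<in>C. \<Sum>s\<in>S. \<Sum>r\<in>R. G c s r) = (\<Sum>s\<in>S. \<Sum>r\<in>R. \<Sum>c\<in>C. G c s r)"
proof -
  have "(\<Sum>c\<in>C. \<Sum>s\<in>S. \<Sum>r\<in>R. G c s r) = (\<Sum>s\<in>S. \<Sum>c\<in>C. \<Sum>r\<in>R. G c s r)" by (rule sum.swap)
  also have "\<dots> = (\<Sum>s\<in>S. \<Sum>r\<in>R. \<Sum>c\<in>C. G c s r)" by (rule sum.cong[OF refl]) (rule sum.swap)
  finally show ?thesis .
qed

lemma quot_bound:
  fixes D :: "'c \<Rightarrow> 'i \<Rightarrow> real" and g :: "'i \<Rightarrow> real"
  assumes finC: "finite C" and fin: "finite I" and jI: "j \<in> I"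
    and gp: "\<forall>l\<in>I. 0 < g l" and F0: "0 \<le> F0" and q: "1 < q"
    and v0: "\<forall>c\<in>C. 0 \<le> v c"
    and Db: "\<forall>l\<in>I. (\<Sum>c\<in>C. \<bar>D c l\<bar> * v c) \<le> B * g l"
  shows "(\<Sum>c\<in>C. \<bar>F0 * (q - 1) * (D c j / g j - (\<Sum>l\<in>I. (g l powr q / (\<Sum>l'\<in>I. g l' powr q)) * (D c l / g l)))\<bar> * v c)
     \<le> 2 * (q - 1) * B * F0"
proof -
  define S where "S = (\<Sum>l'\<in>I. g l' powr q)"
  define \<pi> where "\<pi> l = g l powr q / S" for l
  have Sp: "0 < S" unfolding S_def using fin jI gp by (intro sum_pos) auto
  have \<pi>0: "\<forall>l\<in>I. 0 \<le> \<pi> l" using Sp by (auto simp: \<pi>_def)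
  have \<pi>1: "(\<Sum>l\<in>I. \<pi> l) = 1" using Sp by (simp add: \<pi>_def sum_divide_distrib[symmetric] S_def)
  have ratio: "\<forall>l\<in>I. (\<Sum>c\<in>C. \<bar>D c l / g l\<bar> * v c) \<le> B"
  proof
    fix l assume l: "l \<in> I"
    have "(\<Sum>c\<in>C. \<bar>D c l / g l\<bar> * v c) = (\<Sum>c\<in>C. \<bar>D c l\<bar> * v c) / g l"
      using gp l by (simp add: sum_divide_distrib abs_divide abs_of_pos)
    also have "\<dots> \<le> B" using Db l gp by (simp add: divide_le_eq)
    finally show "(\<Sum>c\<in>C. \<bar>D c l / g l\<bar> * v c) \<le> B" .
  qed
  have pt: "\<bar>F0 * (q - 1) * (D c j / g j - (\<Sum>l\<in>I. \<pi> l * (D c l / g l)))\<bar> * v c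
      \<le> F0 * (q - 1) * (\<bar>D c j / g j\<bar> * v c + (\<Sum>l\<in>I. \<pi> l * (\<bar>D c l / g l\<bar> * v c)))" if c: "c \<in> C" for c
  proof -
    have "\<bar>D c j / g j - (\<Sum>l\<in>I. \<pi> l * (D c l / g l))\<bar> \<le> \<bar>D c j / g j\<bar> + (\<Sum>l\<in>I. \<pi> l * \<bar>D c l / g l\<bar>)"
    proof -
      have "\<bar>(\<Sum>l\<in>I. \<pi> l * (D c l / g l))\<bar> \<le> (\<Sum>l\<in>I. \<bar>\<pi> l * (D c l / g l)\<bar>)" by (rule sum_abs)
      also have "\<dots> = (\<Sum>l\<in>I. \<pi> l * \<bar>D c l / g l\<bar>)" using \<pi>0 by (intro sum.cong) (auto simp: abs_mult)
      finally show ?thesis by linarith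
    qed
    then have "\<bar>D c j / g j - (\<Sum>l\<in>I. \<pi> l * (D c l / g l))\<bar> * v c \<le> (\<bar>D c j / g j\<bar> + (\<Sum>l\<in>I. \<pi> l * \<bar>D c l / g l\<bar>)) * v c"
      using v0 c by (simp add: mult_right_mono)
    also have "\<dots> = \<bar>D c j / g j\<bar> * v c + (\<Sum>l\<in>I. \<pi> l * (\<bar>D c l / g l\<bar> * v c))"
      by (simp only: distrib_right sum_distrib_right mult.assoc)
    finally have h: "\<bar>D c j / g j - (\<Sum>l\<in>I. \<pi> l * (D c l / g l))\<bar> * v c \<le> \<bar>D c j / g j\<bar> * v c + (\<Sum>l\<in>I. \<pi> l * (\<bar>D c l / g l\<bar> * v c))" .
    have "\<bar>F0 * (q - 1) * (D c j / g j - (\<Sum>l\<in>I. \<pi> l * (D c l / g l)))\<bar> * v c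
       = F0 * (q - 1) * (\<bar>D c j / g j - (\<Sum>l\<in>I. \<pi> l * (D c l / g l))\<bar> * v c)"
      using F0 q by (simp add: abs_mult)
    also have "\<dots> \<le> F0 * (q - 1) * (\<bar>D c j / g j\<bar> * v c + (\<Sum>l\<in>I. \<pi> l * (\<bar>D c l / g l\<bar> * v c)))"
      using h F0 q by (intro mult_left_mono) auto
    finally show ?thesis .
  qed
  have "(\<Sum>c\<in>C. \<bar>F0 * (q - 1) * (D c j / g j - (\<Sum>l\<in>I. \<pi> l * (D c l / g l)))\<bar> * v c)
      \<le> (\<Sum>c\<in>C. F0 * (q - 1) * (\<bar>D c j / g j\<bar> * v c + (\<Sum>l\<in>I. \<pi> l * (\<bar>D c l / g l\<bar> * v c))))"
    by (rule sum_mono) (rule pt)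
  also have "\<dots> = F0 * (q - 1) * ((\<Sum>c\<in>C. \<bar>D c j / g j\<bar> * v c) + (\<Sum>l\<in>I. \<pi> l * (\<Sum>c\<in>C. \<bar>D c l / g l\<bar> * v c)))"
  proof -
    have sw: "(\<Sum>c\<in>C. \<Sum>l\<in>I. \<pi> l * (\<bar>D c l / g l\<bar> * v c)) = (\<Sum>l\<in>I. \<pi> l * (\<Sum>c\<in>C. \<bar>D c l / g l\<bar> * v c))"
      by (subst sum.swap) (simp add: sum_distrib_left)
    show ?thesis by (simp only: sum_distrib_left[symmetric] sum.distrib sw)
  qed
  also have "\<dots> \<le> F0 * (q - 1) * (B + (\<Sum>l\<in>I. \<pi> l * B))"
  proof -
    have "(\<Sum>l\<in>I. \<pi> l * (\<Sum>c\<in>C. \<bar>D c l / g l\<bar> * v c)) \<le> (\<Sum>l\<in>I. \<pi> l * B)"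
      using ratio \<pi>0 by (intro sum_mono mult_left_mono) auto
    then show ?thesis using ratio jI F0 q by (intro mult_left_mono) auto
  qed
  also have "\<dots> = 2 * (q - 1) * B * F0"
  proof -
    have "(\<Sum>l\<in>I. \<pi> l * B) = B" using \<pi>1 by (simp add: sum_distrib_right[symmetric])
    then show ?thesis by (simp add: algebra_simps)
  qed
  finally show ?thesis unfolding \<pi>_def S_def .
qed

lemma cd_bound:
  fixes Fd :: "'c \<Rightarrow> nat \<Rightarrow> real" and \<sigma> :: "nat \<Rightarrow> real"
  assumes finC: "finite C" and v0: "\<forall>c\<in>C. 0 \<le> v c" and r: "r < K"
    and s0: "\<forall>k<K. 0 \<le> \<sigma> k" and s1: "(\<Sum>k<K. \<sigma> k) = 1"
    and Fb: "\<forall>k<K. (\<Sum>c\<in>C. \<bar>Fd c k\<bar> * v c) \<le> Cd"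
  shows "(\<Sum>c\<in>C. \<bar>\<sigma> r * (Fd c r - (\<Sum>k<K. \<sigma> k * Fd c k))\<bar> * v c) \<le> 2 * (1 - \<sigma> r) * Cd"
proof -
  define \<delta> where "\<delta> k = (if k = r then 1 else 0) - \<sigma> k" for k :: nat
  have srle: "\<sigma> r \<le> 1"
  proof -
    have "\<sigma> r \<le> (\<Sum>k<K. \<sigma> k)" using r s0 by (intro member_le_sum) auto
    then show ?thesis using s1 by simp
  qed
  have eq: "Fd c r - (\<Sum>k<K. \<sigma> k * Fd c k) = (\<Sum>k<K. \<delta> k * Fd c k)" for c
  proof -
    have d1: "(\<Sum>k<K. (if k = r then 1 else 0) * Fd c k) = (\<Sum>k<K. if k = r then Fd c k else 0)" by (rule sum.cong) auto
    show ?thesis using r by (simp add: \<delta>_def left_diff_distrib sum_subtractf d1)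
  qed
  have dsum: "(\<Sum>k<K. \<bar>\<delta> k\<bar>) = 2 * (1 - \<sigma> r)"
  proof -
    have "(\<Sum>k<K. \<bar>\<delta> k\<bar>) = \<bar>\<delta> r\<bar> + (\<Sum>k\<in>{..<K} - {r}. \<bar>\<delta> k\<bar>)"
      using r by (simp add: sum.remove)
    also have "(\<Sum>k\<in>{..<K} - {r}. \<bar>\<delta> k\<bar>) = (\<Sum>k\<in>{..<K} - {r}. \<sigma> k)"
      using s0 by (intro sum.cong) (auto simp: \<delta>_def)
    also have "\<dots> = 1 - \<sigma> r" using s1 r by (simp add: sum_diff1)
    finally show ?thesis using srle by (simp add: \<delta>_def)
  qed
  have pt: "\<bar>\<sigma> r * (Fd c r - (\<Sum>k<K. \<sigma> k * Fd c k))\<bar> * v c \<le> (\<Sum>k<K. \<bar>\<delta> k\<bar> * (\<bar>Fd c k\<bar> * v c))" if c: "c \<in> C" for c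
  proof -
    have "\<bar>\<sigma> r * (Fd c r - (\<Sum>k<K. \<sigma> k * Fd c k))\<bar> \<le> \<bar>Fd c r - (\<Sum>k<K. \<sigma> k * Fd c k)\<bar>"
      using srle s0 r by (simp add: abs_mult mult_left_le_one_le)
    also have "\<dots> \<le> (\<Sum>k<K. \<bar>\<delta> k\<bar> * \<bar>Fd c k\<bar>)" unfolding eq by (rule order_trans[OF sum_abs]) (simp add: abs_mult)
    finally have "\<bar>\<sigma> r * (Fd c r - (\<Sum>k<K. \<sigma> k * Fd c k))\<bar> * v c \<le> (\<Sum>k<K. \<bar>\<delta> k\<bar> * \<bar>Fd c k\<bar>) * v c"
      using v0 c by (simp add: mult_right_mono)
    then show ?thesis by (simp add: sum_distrib_right mult.assoc)
  qed
  have "(\<Sum>c\<in>C. \<bar>\<sigma> r * (Fd c r - (\<Sum>k<K. \<sigma> k * Fd c k))\<bar> * v c) \<le> (\<Sum>c\<in>C. \<Sum>k<K. \<bar>\<delta> k\<bar> * (\<bar>Fd c k\<bar> * v c))"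
    by (rule sum_mono) (rule pt)
  also have "\<dots> = (\<Sum>k<K. \<bar>\<delta> k\<bar> * (\<Sum>c\<in>C. \<bar>Fd c k\<bar> * v c))"
    by (subst sum.swap) (simp add: sum_distrib_left)
  also have "\<dots> \<le> (\<Sum>k<K. \<bar>\<delta> k\<bar> * Cd)" using Fb by (intro sum_mono mult_left_mono) auto
  also have "\<dots> = 2 * (1 - \<sigma> r) * Cd" using dsum by (simp add: sum_distrib_right[symmetric])
  finally show ?thesis .
qed

lemma g_bound:
  fixes cd Pd :: "'c \<Rightarrow> 's \<Rightarrow> 'r \<Rightarrow> real" and cc P :: "'s \<Rightarrow> 'r \<Rightarrow> real"
  assumes finC: "finite C" and finS: "finite SS" and finR: "finite R"
    and v0: "\<forall>c\<in>C. 0 \<le> v c"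
    and cc0: "\<forall>s\<in>SS. \<forall>r\<in>R. 0 \<le> cc s r" and P0: "\<forall>s\<in>SS. \<forall>r\<in>R. 0 \<le> P s r"
    and cdb: "\<forall>s\<in>SS. \<forall>r\<in>R. (\<Sum>c\<in>C. \<bar>cd c s r\<bar> * v c) \<le> 2 * Cd * cc s r"
    and Pdb: "\<forall>s\<in>SS. \<forall>r\<in>R. (\<Sum>c\<in>C. \<bar>Pd c s r\<bar> * v c) \<le> E * P s r"
    and BE: "0 \<le> 2 * Cd + E" and N: "0 \<le> N" and eps: "0 \<le> \<epsilon>"
  shows "(\<Sum>c\<in>C. \<bar>N * (\<Sum>s\<in>SS. \<Sum>r\<in>R. cd c s r * P s r + cc s r * Pd c s r)\<bar> * v c)
     \<le> (2 * Cd + E) * (N * (\<Sum>s\<in>SS. \<Sum>r\<in>R. cc s r * P s r) + \<epsilon>)"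
proof -
  have pt: "\<bar>N * (\<Sum>s\<in>SS. \<Sum>r\<in>R. cd c s r * P s r + cc s r * Pd c s r)\<bar> * v c
     \<le> N * (\<Sum>s\<in>SS. \<Sum>r\<in>R. (\<bar>cd c s r\<bar> * v c) * P s r + cc s r * (\<bar>Pd c s r\<bar> * v c))" if c: "c \<in> C" for c
  proof -
    have "\<bar>(\<Sum>s\<in>SS. \<Sum>r\<in>R. cd c s r * P s r + cc s r * Pd c s r)\<bar> \<le> (\<Sum>s\<in>SS. \<Sum>r\<in>R. \<bar>cd c s r\<bar> * P s r + cc s r * \<bar>Pd c s r\<bar>)"
    proof -
      have "\<bar>(\<Sum>s\<in>SS. \<Sum>r\<in>R. cd c s r * P s r + cc s r * Pd c s r)\<bar> \<le> (\<Sum>s\<in>SS. \<bar>\<Sum>r\<in>R. cd c s r * P s r + cc s r * Pd c s r\<bar>)" by (rule sum_abs)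
      also have "\<dots> \<le> (\<Sum>s\<in>SS. \<Sum>r\<in>R. \<bar>cd c s r * P s r + cc s r * Pd c s r\<bar>)" by (intro sum_mono sum_abs)
      also have "\<dots> \<le> (\<Sum>s\<in>SS. \<Sum>r\<in>R. \<bar>cd c s r\<bar> * P s r + cc s r * \<bar>Pd c s r\<bar>)"
      proof (intro sum_mono)
        fix s r assume "s \<in> SS" "r \<in> R"
        then show "\<bar>cd c s r * P s r + cc s r * Pd c s r\<bar> \<le> \<bar>cd c s r\<bar> * P s r + cc s r * \<bar>Pd c s r\<bar>"
          using cc0 P0 by (intro order_trans[OF abs_triangle_ineq]) (simp add: abs_mult)
      qed
      finally show ?thesis .
    qed
    then have "\<bar>N * (\<Sum>s\<in>SS. \<Sum>r\<in>R. cd c s r * P s r + cc s r * Pd c s r)\<bar> * v c \<le> N * (\<Sum>s\<in>SS. \<Sum>r\<in>R. \<bar>cd c s r\<bar> * P s r + cc s r * \<bar>Pd c s r\<bar>) * v c"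
      using N v0 c by (simp add: abs_mult mult_left_mono mult_right_mono)
    also have "\<dots> = N * (\<Sum>s\<in>SS. \<Sum>r\<in>R. (\<bar>cd c s r\<bar> * v c) * P s r + cc s r * (\<bar>Pd c s r\<bar> * v c))"
      unfolding mult.assoc[of N] sum_distrib_right distrib_right by (simp add: mult_ac)
    finally show ?thesis .
  qed
  have "(\<Sum>c\<in>C. \<bar>N * (\<Sum>s\<in>SS. \<Sum>r\<in>R. cd c s r * P s r + cc s r * Pd c s r)\<bar> * v c)
     \<le> (\<Sum>c\<in>C. N * (\<Sum>s\<in>SS. \<Sum>r\<in>R. (\<bar>cd c s r\<bar> * v c) * P s r + cc s r * (\<bar>Pd c s r\<bar> * v c)))"
    by (rule sum_mono) (rule pt)
  also have "\<dots> = N * (\<Sum>s\<in>SS. \<Sum>r\<in>R. (\<Sum>c\<in>C. \<bar>cd c s r\<bar> * v c) * P s r + cc s r * (\<Sum>c\<in>C. \<bar>Pd c s r\<bar> * v c))"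
  proof -
    have "(\<Sum>c\<in>C. N * (\<Sum>s\<in>SS. \<Sum>r\<in>R. (\<bar>cd c s r\<bar> * v c) * P s r + cc s r * (\<bar>Pd c s r\<bar> * v c)))
       = N * (\<Sum>c\<in>C. \<Sum>s\<in>SS. \<Sum>r\<in>R. (\<bar>cd c s r\<bar> * v c) * P s r + cc s r * (\<bar>Pd c s r\<bar> * v c))"
      by (simp only: sum_distrib_left)
    also have "\<dots> = N * (\<Sum>s\<in>SS. \<Sum>r\<in>R. \<Sum>c\<in>C. (\<bar>cd c s r\<bar> * v c) * P s r + cc s r * (\<bar>Pd c s r\<bar> * v c))"
      by (simp only: sum_swap3[where C=C and S=SS and R=R])
    also have "\<dots> = N * (\<Sum>s\<in>SS. \<Sum>r\<in>R. (\<Sum>c\<in>C. \<bar>cd c s r\<bar> * v c) * P s r + cc s r * (\<Sum>c\<in>C. \<bar>Pd c s r\<bar> * v c))"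
      by (simp only: sum.distrib sum_distrib_left sum_distrib_right)
    finally show ?thesis .
  qed
  also have "\<dots> \<le> N * (\<Sum>s\<in>SS. \<Sum>r\<in>R. (2 * Cd * cc s r) * P s r + cc s r * (E * P s r))"
  proof (rule mult_left_mono[OF _ N], intro sum_mono add_mono)
    fix s r assume sr: "s \<in> SS" "r \<in> R"
    show "(\<Sum>c\<in>C. \<bar>cd c s r\<bar> * v c) * P s r \<le> 2 * Cd * cc s r * P s r"
      using cdb P0 sr by (intro mult_right_mono) auto
    show "cc s r * (\<Sum>c\<in>C. \<bar>Pd c s r\<bar> * v c) \<le> cc s r * (E * P s r)"
      using Pdb cc0 sr by (intro mult_left_mono) auto
  qed
  also have "\<dots> = (2 * Cd + E) * (N * (\<Sum>s\<in>SS. \<Sum>r\<in>R. cc s r * P s r))"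
    by (simp add: sum_distrib_left algebra_simps)
  also have "\<dots> \<le> (2 * Cd + E) * (N * (\<Sum>s\<in>SS. \<Sum>r\<in>R. cc s r * P s r) + \<epsilon>)"
    using BE eps by (simp add: mult_left_mono)
  finally show ?thesis .
qed

lemma psi_bound:
  fixes wk \<delta> \<alpha> xs :: "nat \<Rightarrow> real" and u :: "nat \<Rightarrow> nat \<Rightarrow> real"
  assumes pw: "1 < pw" and pu: "1 < pu"
    and wk0: "\<forall>l<n1. 0 \<le> wk l" and wkn: "(\<Sum>l<n1. \<bar>wk l\<bar> powr pw) powr (1/pw) \<le> \<rho>w"
    and u0: "\<forall>l<n1. \<forall>m<d. 0 \<le> u l m" and un: "(\<Sum>l<n1. \<Sum>m<d. \<bar>u l m\<bar> powr pu) powr (1/pu) \<le> \<rho>u"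
    and rup: "0 < \<rho>u"
    and xs0: "\<forall>m<d. 0 \<le> xs m" and xn: "(\<Sum>m<d. \<bar>xs m\<bar> powr hconj pu) powr (1/hconj pu) \<le> \<rho>x"
    and \<delta>0: "\<forall>l<n1. 0 \<le> \<delta> l" and \<alpha>1: "\<forall>l<n1. 1 \<le> \<alpha> l"
  shows "(\<Sum>l<n1. wk l * (\<delta> l * (\<Sum>m<d. u l m * xs m) powr \<alpha> l)) \<le> \<rho>w * PsiA n1 \<alpha> (hconj pw) pu \<delta> (\<rho>u * \<rho>x)"
proof -
  define q where "q = hconj pw"
  have q1: "1 < q" and qpw: "1/pw + 1/q = 1" using hconj_facts[OF pw] by (auto simp: q_def)
  have pu': "1 < hconj pu" "1/pu + 1/hconj pu = 1" using hconj_facts[OF pu] by auto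
  define z where "z l = (\<Sum>m<d. u l m * xs m)" for l
  define a where "a l = \<delta> l * z l powr \<alpha> l" for l
  define t where "t = \<rho>u * \<rho>x"
  have z0: "0 \<le> z l" if "l < n1" for l unfolding z_def using u0 xs0 that by (intro sum_nonneg) auto
  have a0: "0 \<le> a l" if "l < n1" for l unfolding a_def using \<delta>0 that by auto
  have rx0: "0 \<le> \<rho>x" using xn by (meson order_trans powr_ge_zero)
  have t0: "0 \<le> t" unfolding t_def using rx0 rup by simp
  have st1: "(\<Sum>l<n1. wk l * a l) \<le> \<rho>w * (\<Sum>l<n1. a l powr q) powr (1/q)"
  proof -
    have "(\<Sum>l<n1. wk l * a l) \<le> (\<Sum>l<n1. wk l powr pw) powr (1/pw) * (\<Sum>l<n1. a l powr q) powr (1/q)"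
      by (rule holder_sum) (use wk0 a0 pw q1 qpw in auto)
    also have "(\<Sum>l<n1. wk l powr pw) = (\<Sum>l<n1. \<bar>wk l\<bar> powr pw)" using wk0 by (intro sum.cong) auto
    also have "(\<Sum>l<n1. \<bar>wk l\<bar> powr pw) powr (1/pw) * (\<Sum>l<n1. a l powr q) powr (1/q) \<le> \<rho>w * (\<Sum>l<n1. a l powr q) powr (1/q)"
      using wkn by (intro mult_right_mono) auto
    finally show ?thesis .
  qed
  define Nl where "Nl l = (\<Sum>m<d. \<bar>u l m\<bar> powr pu) powr (1/pu)" for l
  define s where "s l = Nl l / \<rho>u" for l
  have zN: "z l \<le> Nl l * \<rho>x" if l: "l < n1" for l
  proof -
    have "z l \<le> (\<Sum>m<d. u l m powr pu) powr (1/pu) * (\<Sum>m<d. xs m powr hconj pu) powr (1/hconj pu)"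
      unfolding z_def by (rule holder_sum) (use u0 xs0 l pu pu' in auto)
    also have "(\<Sum>m<d. u l m powr pu) = (\<Sum>m<d. \<bar>u l m\<bar> powr pu)" using u0 l by (intro sum.cong) auto
    also have "(\<Sum>m<d. xs m powr hconj pu) = (\<Sum>m<d. \<bar>xs m\<bar> powr hconj pu)" using xs0 by (intro sum.cong) auto
    finally show ?thesis unfolding Nl_def using xn by (meson order_trans mult_left_mono powr_ge_zero)
  qed
  have s0: "0 \<le> s l" for l unfolding s_def Nl_def using rup by simp
  have ssum: "(\<Sum>l<n1. s l powr pu) \<le> 1"
  proof -
    have e: "s l powr pu = (\<Sum>m<d. \<bar>u l m\<bar> powr pu) / \<rho>u powr pu" for l
      unfolding s_def Nl_def using rup pu by (simp add: powr_divide powr_powr sum_nonneg)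
    have "(\<Sum>l<n1. \<Sum>m<d. \<bar>u l m\<bar> powr pu) = ((\<Sum>l<n1. \<Sum>m<d. \<bar>u l m\<bar> powr pu) powr (1/pu)) powr pu"
      using pu by (simp add: powr_powr sum_nonneg)
    also have "\<dots> \<le> \<rho>u powr pu" using un pu by (intro powr_mono2) auto
    finally have "(\<Sum>l<n1. \<Sum>m<d. \<bar>u l m\<bar> powr pu) \<le> \<rho>u powr pu" .
    then show ?thesis using rup by (simp add: e sum_divide_distrib[symmetric] divide_le_eq)
  qed
  have sp0: "0 \<le> s l powr pu" for l by simp
  have s1: "s l \<le> 1" if "l < n1" for l
  proof -
    have "s l powr pu \<le> (\<Sum>l<n1. s l powr pu)" using that by (intro member_le_sum) auto
    then have "s l powr pu \<le> 1 powr pu" using ssum by simp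
    then show ?thesis using pu s0[of l] by (metis less_eq_real_def not_le powr_less_mono2 zero_less_one order_less_trans)
  qed
  define b where "b l = (\<delta> l * t powr \<alpha> l) powr q" for l
  have st4: "a l powr q \<le> b l * s l powr (\<alpha> l * q)" if l: "l < n1" for l
  proof -
    have "Nl l * \<rho>x = s l * t" unfolding s_def t_def using rup by simp
    then have "z l \<le> s l * t" using zN[OF l] by simp
    then have "z l powr \<alpha> l \<le> (s l * t) powr \<alpha> l" using z0[OF l] \<alpha>1 l by (intro powr_mono2) auto
    also have "\<dots> = t powr \<alpha> l * s l powr \<alpha> l" using s0 t0 by (simp add: powr_mult)
    finally have "a l \<le> (\<delta> l * t powr \<alpha> l) * s l powr \<alpha> l" unfolding a_def using \<delta>0 l by (simp add: mult_left_mono mult.assoc)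
    then have "a l powr q \<le> ((\<delta> l * t powr \<alpha> l) * s l powr \<alpha> l) powr q" using a0[OF l] q1 by (intro powr_mono2) auto
    also have "\<dots> = b l * s l powr (\<alpha> l * q)" unfolding b_def using \<delta>0 l by (simp add: powr_mult powr_powr)
    finally show ?thesis .
  qed
  define J where "J = {l. l < n1 \<and> \<alpha> l * q < pu}"
  define Jc where "Jc = {l. l < n1 \<and> pu \<le> \<alpha> l * q}"
  define ab where "ab = Min (\<alpha> ` J)"
  define AT where "AT = (\<Sum>l\<in>J. (\<delta> l * t powr \<alpha> l) powr (q * pu / (pu - ab * q))) powr (1 - ab * q / pu)"
  define MT where "MT = (if Jc = {} then 0 else Max ((\<lambda>j. (\<delta> j * t powr \<alpha> j) powr q) ` Jc))"
  have finJ: "finite J" "finite Jc" unfolding J_def Jc_def by auto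
  have split: "{..<n1} = J \<union> Jc" "J \<inter> Jc = {}" unfolding J_def Jc_def by auto
  have JM: "(\<Sum>l\<in>Jc. b l * s l powr (\<alpha> l * q)) \<le> MT"
  proof (cases "Jc = {}")
    case True then show ?thesis by (simp add: MT_def)
  next
    case False
    have M0: "0 \<le> MT" using False finJ unfolding MT_def b_def
      by (simp add: Max_ge_iff) (metis ex_in_conv powr_ge_zero)
    have "(\<Sum>l\<in>Jc. b l * s l powr (\<alpha> l * q)) \<le> (\<Sum>l\<in>Jc. MT * s l powr pu)"
    proof (rule sum_mono)
      fix l assume l: "l \<in> Jc"
      have "b l \<le> MT" using l False finJ unfolding MT_def b_def by (auto intro!: Max_ge)
      moreover have "s l powr (\<alpha> l * q) \<le> s l powr pu" using l s0 s1 unfolding Jc_def by (intro powr_mono') auto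
      ultimately show "b l * s l powr (\<alpha> l * q) \<le> MT * s l powr pu" using M0 unfolding b_def
        by (intro mult_mono) auto
    qed
    also have "\<dots> = MT * (\<Sum>l\<in>Jc. s l powr pu)" by (simp add: sum_distrib_left)
    also have "\<dots> \<le> MT * 1"
    proof -
      have "(\<Sum>l\<in>Jc. s l powr pu) \<le> (\<Sum>l<n1. s l powr pu)" using split finJ by (intro sum_mono2) auto
      then show ?thesis using ssum M0 by (intro mult_left_mono) auto
    qed
    finally show ?thesis by simp
  qed
  have JA: "(\<Sum>l\<in>J. b l * s l powr (\<alpha> l * q)) \<le> AT"
  proof (cases "J = {}")
    case True then show ?thesis by (simp add: AT_def)
  next
    case False
    have abJ: "ab \<in> \<alpha> ` J" unfolding ab_def using False finJ by (intro Min_in) auto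
    have ab1: "1 \<le> ab" and abq: "ab * q < pu" using abJ \<alpha>1 unfolding J_def by auto
    have able: "ab \<le> \<alpha> l" if "l \<in> J" for l unfolding ab_def using that finJ by (intro Min_le) auto
    define r where "r = pu / (ab * q)"
    define r' where "r' = pu / (pu - ab * q)"
    have r1: "1 < r" "1 < r'" "1/r' + 1/r = 1" unfolding r_def r'_def using abq ab1 q1 pu
      by (auto simp: field_simps)
    have b0: "0 \<le> b l" for l unfolding b_def by simp
    have "(\<Sum>l\<in>J. b l * s l powr (\<alpha> l * q)) \<le> (\<Sum>l\<in>J. b l * s l powr (ab * q))"
    proof (rule sum_mono)
      fix l assume l: "l \<in> J"
      have "s l powr (\<alpha> l * q) \<le> s l powr (ab * q)" using l s0 s1 able[OF l] q1 unfolding J_def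
        by (intro powr_mono') auto
      then show "b l * s l powr (\<alpha> l * q) \<le> b l * s l powr (ab * q)" using b0 by (intro mult_left_mono) auto
    qed
    also have "\<dots> \<le> (\<Sum>l\<in>J. b l powr r') powr (1/r') * (\<Sum>l\<in>J. (s l powr (ab * q)) powr r) powr (1/r)"
      by (rule holder_sum) (use finJ b0 r1 in auto)
    also have "\<dots> = AT * (\<Sum>l\<in>J. s l powr pu) powr (1/r)"
    proof -
      have e1: "(\<Sum>l\<in>J. (s l powr (ab * q)) powr r) = (\<Sum>l\<in>J. s l powr pu)"
        unfolding r_def using ab1 q1 by (intro sum.cong) (auto simp: powr_powr)
      have e2: "(\<Sum>l\<in>J. b l powr r') = (\<Sum>l\<in>J. (\<delta> l * t powr \<alpha> l) powr (q * pu / (pu - ab * q)))"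
        unfolding b_def r'_def by (intro sum.cong) (auto simp: powr_powr)
      have e3: "1/r' = 1 - ab * q / pu" unfolding r'_def using pu abq by (simp add: field_simps)
      show ?thesis unfolding e1 e2 e3 AT_def ..
    qed
    also have "\<dots> \<le> AT * 1"
    proof -
      have "(\<Sum>l\<in>J. s l powr pu) \<le> (\<Sum>l<n1. s l powr pu)" using split finJ by (intro sum_mono2) auto
      then have "(\<Sum>l\<in>J. s l powr pu) powr (1/r) \<le> 1" using ssum r1 by (intro powr_le1) (auto simp: sum_nonneg)
      then show ?thesis unfolding AT_def by (intro mult_left_mono) auto
    qed
    finally show ?thesis by simp
  qed
  have st5: "(\<Sum>l<n1. a l powr q) \<le> AT + MT"
  proof -
    have "(\<Sum>l<n1. a l powr q) \<le> (\<Sum>l<n1. b l * s l powr (\<alpha> l * q))" by (rule sum_mono) (use st4 in auto)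
    also have "\<dots> = (\<Sum>l\<in>J. b l * s l powr (\<alpha> l * q)) + (\<Sum>l\<in>Jc. b l * s l powr (\<alpha> l * q))"
      unfolding split(1) using split(2) finJ by (rule sum.union_disjoint[rotated 2]) 
    also have "\<dots> \<le> AT + MT" using JA JM by simp
    finally show ?thesis .
  qed
  have psiEq: "PsiA n1 \<alpha> (hconj pw) pu \<delta> (\<rho>u * \<rho>x) = (AT + MT) powr (1/q)"
    unfolding PsiA_def Let_def AT_def MT_def ab_def J_def Jc_def t_def q_def by simp
  have "(\<Sum>l<n1. a l powr q) powr (1/q) \<le> (AT + MT) powr (1/q)"
    using st5 q1 by (intro powr_mono2) (auto simp: sum_nonneg)
  then have "\<rho>w * (\<Sum>l<n1. a l powr q) powr (1/q) \<le> \<rho>w * PsiA n1 \<alpha> (hconj pw) pu \<delta> (\<rho>u * \<rho>x)"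
    unfolding psiEq using wkn by (intro mult_left_mono) (auto intro: order_trans[OF powr_ge_zero])
  then show ?thesis using st1 unfolding a_def z_def by simp
qed

lemma lse_deriv:
  fixes K :: nat
  assumes K: "0 < K" and dF: "\<forall>k<K. (F k has_real_derivative Fd k) (at t0)"
  shows "((\<lambda>t. ln (\<Sum>k<K. exp (F k t))) has_real_derivative
     (\<Sum>k<K. (exp (F k t0) / (\<Sum>k'<K. exp (F k' t0))) * Fd k)) (at t0)"
proof -
  have S0: "0 < (\<Sum>k<K. exp (F k t0))" using K by (auto intro!: sum_pos)
  have "((\<lambda>t. (\<Sum>k<K. exp (F k t))) has_real_derivative (\<Sum>k<K. exp (F k t0) * Fd k)) (at t0)"
    using dF by (auto intro!: DERIV_sum derivative_eq_intros)
  from DERIV_chain2[OF DERIV_ln[OF S0] this]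
  have "((\<lambda>t. ln (\<Sum>k<K. exp (F k t))) has_real_derivative (1 / (\<Sum>k<K. exp (F k t0))) * (\<Sum>k<K. exp (F k t0) * Fd k)) (at t0)"
    by (simp add: inverse_eq_divide)
  then show ?thesis by (simp add: sum_divide_distrib sum_distrib_left)
qed

lemma softmax_deriv:
  fixes K :: nat
  assumes i: "i < K" and dF: "\<forall>k<K. (F k has_real_derivative Fd k) (at t0)"
  shows "((\<lambda>t. exp (F i t) / (\<Sum>k<K. exp (F k t))) has_real_derivative
     (exp (F i t0) / (\<Sum>k'<K. exp (F k' t0))) * (Fd i - (\<Sum>k<K. (exp (F k t0) / (\<Sum>k'<K. exp (F k' t0))) * Fd k))) (at t0)"
proof -
  define S where "S = (\<Sum>k<K. exp (F k t0))"
  have S0: "0 < S" unfolding S_def using i by (auto intro!: sum_pos)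
  have dS: "((\<lambda>t. (\<Sum>k<K. exp (F k t))) has_real_derivative (\<Sum>k<K. exp (F k t0) * Fd k)) (at t0)"
    using dF by (auto intro!: DERIV_sum derivative_eq_intros)
  have dFi: "(F i has_real_derivative Fd i) (at t0)" using dF i by auto
  have "((\<lambda>t. exp (F i t) / (\<Sum>k<K. exp (F k t))) has_real_derivative
      (exp (F i t0) * Fd i * S - exp (F i t0) * (\<Sum>k<K. exp (F k t0) * Fd k)) / (S * S)) (at t0)"
    using DERIV_divide[OF DERIV_chain2[OF DERIV_exp dFi] dS] S0 unfolding S_def by (simp add: mult.commute)
  moreover have "(exp (F i t0) * Fd i * S - exp (F i t0) * (\<Sum>k<K. exp (F k t0) * Fd k)) / (S * S)
      = (exp (F i t0) / S) * (Fd i - (\<Sum>k<K. (exp (F k t0) / S) * Fd k))"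
    using S0 by (simp add: field_simps sum_divide_distrib[symmetric])
  ultimately show ?thesis unfolding S_def by simp
qed

locale NN =
  fixes K n1 d n :: nat and x :: "nat \<Rightarrow> nat \<Rightarrow> real" and y :: "nat \<Rightarrow> nat"
    and \<alpha> :: "nat \<Rightarrow> real" and \<epsilon> :: real
  assumes npos: "0 < n" and xnn: "\<forall>i<n. \<forall>m<d. 0 \<le> x i m" and yK: "\<forall>i<n. y i < K"
    and \<alpha>1: "\<forall>l<n1. 1 \<le> \<alpha> l" and epos: "0 < \<epsilon>"
begin

definition z where "z u s l = (\<Sum>m<d. u l m * x s m)"
definition h where "h u s l = z u s l powr \<alpha> l"
definition f where "f w u s r = (\<Sum>l<n1. w r l * h u s l)"
definition sm where "sm w u s r = exp (f w u s r) / (\<Sum>k<K. exp (f w u s k))"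
definition cc where "cc w u s r = (if r = y s then 1 else 0) - sm w u s r + 1"
definition gW where "gW w u r l = (1 / real n) * (\<Sum>s<n. cc w u s r * h u s l) + \<epsilon>"
definition e where "e u s a = \<alpha> a * z u s a powr (\<alpha> a - 1)"
definition gU where "gU w u a b = (1 / real n) * (\<Sum>s<n. \<Sum>r<K. cc w u s r * (w r a * e u s a * x s b)) + \<epsilon>"
definition pos where "pos u \<longleftrightarrow> (\<forall>l<n1. \<forall>m<d. 0 < u l m)"

abbreviation "\<Phi> \<equiv> PhiObj K n1 d n x y \<alpha> \<epsilon>"

lemma fnet_eq: "fnet n1 d \<alpha> w u (x s) = f w u s"
  by (rule ext) (simp add: fnet_def f_def h_def z_def)

lemma Phi_eq: "\<Phi> w u = (1 / real n) * (\<Sum>s<n. f w u s (y s) - ln (\<Sum>k<K. exp (f w u s k)) + (\<Sum>r<K. f w u s r))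
   + \<epsilon> * ((\<Sum>r<K. \<Sum>l<n1. w r l) + (\<Sum>l<n1. \<Sum>m<d. u l m))"
  by (simp add: PhiObj_def xent_def fnet_eq)

lemma Phi_deriv:
  assumes K: "0 < K"
    and dF: "\<forall>s<n. \<forall>r<K. ((\<lambda>t. f (W t) (U t) s r) has_real_derivative Fd s r) (at t0)"
    and dR: "((\<lambda>t. (\<Sum>r<K. \<Sum>l<n1. W t r l) + (\<Sum>l<n1. \<Sum>m<d. U t l m)) has_real_derivative 1) (at t0)"
  shows "((\<lambda>t. \<Phi> (W t) (U t)) has_real_derivative
     (1 / real n) * (\<Sum>s<n. Fd s (y s) - (\<Sum>k<K. sm (W t0) (U t0) s k * Fd s k) + (\<Sum>r<K. Fd s r)) + \<epsilon>) (at t0)"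
proof -
  have each: "((\<lambda>t. f (W t) (U t) s (y s) - ln (\<Sum>k<K. exp (f (W t) (U t) s k)) + (\<Sum>r<K. f (W t) (U t) s r))
      has_real_derivative Fd s (y s) - (\<Sum>k<K. sm (W t0) (U t0) s k * Fd s k) + (\<Sum>r<K. Fd s r)) (at t0)" if s: "s < n" for s
  proof -
    have d1: "((\<lambda>t. f (W t) (U t) s (y s)) has_real_derivative Fd s (y s)) (at t0)" using dF yK s by auto
    have d2: "((\<lambda>t. ln (\<Sum>k<K. exp (f (W t) (U t) s k))) has_real_derivative (\<Sum>k<K. sm (W t0) (U t0) s k * Fd s k)) (at t0)"
      using lse_deriv[OF K, of "\<lambda>k t. f (W t) (U t) s k" "Fd s" t0] dF s by (simp add: sm_def)
    have d3: "((\<lambda>t. (\<Sum>r<K. f (W t) (U t) s r)) has_real_derivative (\<Sum>r<K. Fd s r)) (at t0)"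
      using dF s by (auto intro!: DERIV_sum)
    show ?thesis by (intro DERIV_add DERIV_diff d1 d2 d3)
  qed
  have "((\<lambda>t. (\<Sum>s<n. f (W t) (U t) s (y s) - ln (\<Sum>k<K. exp (f (W t) (U t) s k)) + (\<Sum>r<K. f (W t) (U t) s r)))
     has_real_derivative (\<Sum>s<n. Fd s (y s) - (\<Sum>k<K. sm (W t0) (U t0) s k * Fd s k) + (\<Sum>r<K. Fd s r))) (at t0)"
    using each by (auto intro!: DERIV_sum)
  then have "((\<lambda>t. (1 / real n) * (\<Sum>s<n. f (W t) (U t) s (y s) - ln (\<Sum>k<K. exp (f (W t) (U t) s k)) + (\<Sum>r<K. f (W t) (U t) s r))
      + \<epsilon> * ((\<Sum>r<K. \<Sum>l<n1. W t r l) + (\<Sum>l<n1. \<Sum>m<d. U t l m)))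
     has_real_derivative (1 / real n) * (\<Sum>s<n. Fd s (y s) - (\<Sum>k<K. sm (W t0) (U t0) s k * Fd s k) + (\<Sum>r<K. Fd s r)) + \<epsilon> * 1) (at t0)"
    by (intro DERIV_add DERIV_cmult dR)
  then show ?thesis unfolding Phi_eq by simp
qed

end

context NN begin

lemma f_wdir: "l0 < n1 \<Longrightarrow> f (w(k := (w k)(l0 := t))) u s r = f w u s r + (if r = k then (t - w k l0) * h u s l0 else 0)"
proof (cases "r = k")
  case True
  assume l0: "l0 < n1"
  have "f (w(k := (w k)(l0 := t))) u s r = (\<Sum>l<n1. w r l * h u s l + (if l = l0 then (t - w k l0) * h u s l0 else 0))"
    unfolding f_def using True by (intro sum.cong) (auto simp: algebra_simps)
  also have "\<dots> = f w u s r + (t - w k l0) * h u s l0" using l0 by (simp add: sum.distrib f_def)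
  finally show ?thesis using True by simp
qed (simp add: f_def)

lemma f_wdir_deriv: "l0 < n1 \<Longrightarrow> ((\<lambda>t. f (w(k := (w k)(l0 := t))) u s r) has_real_derivative (if r = k then h u s l0 else 0)) (at t0)"
  by (simp add: f_wdir) (auto intro!: derivative_eq_intros)

lemma sumw_wdir: fixes w :: "nat \<Rightarrow> nat \<Rightarrow> real" shows "k < K \<Longrightarrow> l0 < n1 \<Longrightarrow> (\<Sum>r<K. \<Sum>l<n1. (w(k := (w k)(l0 := t))) r l) = (\<Sum>r<K. \<Sum>l<n1. w r l) + (t - w k l0)"
proof -
  assume k: "k < K" and l0: "l0 < n1"
  have "(\<Sum>r<K. \<Sum>l<n1. (w(k := (w k)(l0 := t))) r l) = (\<Sum>r<K. (\<Sum>l<n1. w r l) + (if r = k then t - w k l0 else 0))"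
  proof (rule sum.cong[OF refl])
    fix r assume "r \<in> {..<K}"
    show "(\<Sum>l<n1. (w(k := (w k)(l0 := t))) r l) = (\<Sum>l<n1. w r l) + (if r = k then t - w k l0 else 0)"
    proof (cases "r = k")
      case True
      have "(\<Sum>l<n1. (w(k := (w k)(l0 := t))) r l) = (\<Sum>l<n1. w r l + (if l = l0 then t - w k l0 else 0))"
        using True by (intro sum.cong) (auto simp: algebra_simps)
      then show ?thesis using l0 True by (simp add: sum.distrib)
    qed simp
  qed
  then show ?thesis using k by (simp add: sum.distrib)
qed

lemma dW_Phi: assumes r: "r < K" and l: "l < n1" shows "dW \<Phi> w u r l = gW w u r l"
proof -
  have K: "0 < K" using r by simp
  have dR: "((\<lambda>t. (\<Sum>r'<K. \<Sum>l'<n1. (w(r := (w r)(l := t))) r' l') + (\<Sum>l'<n1. \<Sum>m<d. u l' m)) has_real_derivative 1) (at (w r l))"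
    unfolding sumw_wdir[OF r l] by (auto intro!: derivative_eq_intros)
  have dF: "\<forall>s<n. \<forall>r'<K. ((\<lambda>t. f (w(r := (w r)(l := t))) u s r') has_real_derivative (if r' = r then h u s l else 0)) (at (w r l))"
    by (intro allI impI f_wdir_deriv[OF l])
  note D = Phi_deriv[OF K dF dR]
  have eq: "(1 / real n) * (\<Sum>s<n. (if y s = r then h u s l else 0) - (\<Sum>k<K. sm (w(r := (w r)(l := w r l))) u s k * (if k = r then h u s l else 0)) + (\<Sum>r'<K. (if r' = r then h u s l else 0))) + \<epsilon>
     = gW w u r l"
    unfolding gW_def cc_def using r by (intro arg_cong2[where f="(+)"] arg_cong2[where f="(*)"] sum.cong refl) (auto simp: if_distrib algebra_simps sum.delta' cong: if_cong)
  show ?thesis unfolding dW_def by (rule DERIV_imp_deriv[OF D[unfolded eq]])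
qed

end

context NN begin

lemma z_udir: "m0 < d \<Longrightarrow> z (u(l0 := (u l0)(m0 := t))) s l = z u s l + (if l = l0 then (t - u l0 m0) * x s m0 else 0)"
proof (cases "l = l0")
  case True
  assume m0: "m0 < d"
  have "z (u(l0 := (u l0)(m0 := t))) s l = (\<Sum>m<d. u l m * x s m + (if m = m0 then (t - u l0 m0) * x s m0 else 0))"
    unfolding z_def using True by (intro sum.cong) (auto simp: algebra_simps)
  also have "\<dots> = z u s l + (t - u l0 m0) * x s m0" using m0 by (simp add: sum.distrib z_def)
  finally show ?thesis using True by simp
qed (simp add: z_def)

lemma z_nonneg: assumes "pos u" "s < n" "l < n1" shows "0 \<le> z u s l"
  unfolding z_def
proof (rule sum_nonneg)
  fix m assume "m \<in> {..<d}"
  then show "0 \<le> u l m * x s m" using assms xnn by (simp add: pos_def less_imp_le)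
qed

lemma z_pos: assumes "pos u" "s < n" "l < n1" "m0 < d" "x s m0 \<noteq> 0" shows "0 < z u s l"
proof -
  have "u l m0 * x s m0 \<le> z u s l" unfolding z_def
  proof (rule member_le_sum)
    fix m assume "m \<in> {..<d} - {m0}"
    then show "0 \<le> u l m * x s m" using assms xnn by (simp add: pos_def less_imp_le)
  qed (use assms in auto)
  moreover have "0 < u l m0 * x s m0"
  proof -
    have "0 \<le> x s m0" using assms xnn by auto
    then have "0 < x s m0" using assms(5) by linarith
    moreover have "0 < u l m0" using assms by (auto simp: pos_def)
    ultimately show ?thesis by simp
  qed
  ultimately show ?thesis by linarith
qed

lemma h_udir_deriv:
  assumes pu: "pos u" and s: "s < n" and l0: "l0 < n1" and m0: "m0 < d"
  shows "((\<lambda>t. h (u(l0 := (u l0)(m0 := t))) s l) has_real_derivative (if l = l0 then e u s l0 * x s m0 else 0)) (at (u l0 m0))"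
proof (cases "l = l0")
  case False then show ?thesis unfolding h_def z_udir[OF m0] by simp
next
  case True
  show ?thesis
  proof (cases "x s m0 = 0")
    case True0: True
    then show ?thesis unfolding h_def z_udir[OF m0] using True by simp
  next
    case False
    have zp: "0 < z u s l0" using z_pos[OF pu s l0 m0 False] .
    have "((\<lambda>t. (z u s l0 + (t - u l0 m0) * x s m0) powr \<alpha> l0) has_real_derivative \<alpha> l0 * (z u s l0 + (u l0 m0 - u l0 m0) * x s m0) powr (\<alpha> l0 - of_nat 1) * x s m0) (at (u l0 m0))"
      by (rule DERIV_fun_powr) (auto intro!: derivative_eq_intros simp: zp)
    then show ?thesis unfolding h_def z_udir[OF m0] e_def using True by simp
  qed
qed

lemma e_udir_deriv:
  assumes pu: "pos u" and s: "s < n" and l0: "l0 < n1" and m0: "m0 < d"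
  shows "((\<lambda>t. e (u(l0 := (u l0)(m0 := t))) s a) has_real_derivative (if a = l0 then \<alpha> a * ((\<alpha> a - 1) * z u s a powr (\<alpha> a - 2) * x s m0) else 0)) (at (u l0 m0))"
proof (cases "a = l0")
  case False then show ?thesis unfolding e_def z_udir[OF m0] by simp
next
  case True
  show ?thesis
  proof (cases "x s m0 = 0")
    case True0: True
    then show ?thesis unfolding e_def z_udir[OF m0] using True by simp
  next
    case False
    have zp: "0 < z u s l0" using z_pos[OF pu s l0 m0 False] .
    have "((\<lambda>t. (z u s l0 + (t - u l0 m0) * x s m0) powr (\<alpha> l0 - 1)) has_real_derivative (\<alpha> l0 - 1) * (z u s l0 + (u l0 m0 - u l0 m0) * x s m0) powr (\<alpha> l0 - 1 - of_nat 1) * x s m0) (at (u l0 m0))"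
      by (rule DERIV_fun_powr) (auto intro!: derivative_eq_intros simp: zp)
    from DERIV_cmult[OF this, of "\<alpha> l0"]
    show ?thesis unfolding e_def z_udir[OF m0] using True by (simp add: algebra_simps)
  qed
qed

lemma f_udir_deriv:
  assumes pu: "pos u" and s: "s < n" and l0: "l0 < n1" and m0: "m0 < d"
  shows "((\<lambda>t. f w (u(l0 := (u l0)(m0 := t))) s r) has_real_derivative w r l0 * (e u s l0 * x s m0)) (at (u l0 m0))"
proof -
  have "((\<lambda>t. f w (u(l0 := (u l0)(m0 := t))) s r) has_real_derivative (\<Sum>l<n1. w r l * (if l = l0 then e u s l0 * x s m0 else 0))) (at (u l0 m0))"
    unfolding f_def by (intro DERIV_sum DERIV_cmult h_udir_deriv[OF pu s l0 m0])
  moreover have "(\<Sum>l<n1. w r l * (if l = l0 then e u s l0 * x s m0 else 0)) = w r l0 * (e u s l0 * x s m0)"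
    using l0 by (simp add: if_distrib cong: if_cong)
  ultimately show ?thesis by simp
qed

lemma sumu_udir: fixes u :: "nat \<Rightarrow> nat \<Rightarrow> real" shows "l0 < n1 \<Longrightarrow> m0 < d \<Longrightarrow> (\<Sum>l<n1. \<Sum>m<d. (u(l0 := (u l0)(m0 := t))) l m) = (\<Sum>l<n1. \<Sum>m<d. u l m) + (t - u l0 m0)"
proof -
  assume l0: "l0 < n1" and m0: "m0 < d"
  have "(\<Sum>l<n1. \<Sum>m<d. (u(l0 := (u l0)(m0 := t))) l m) = (\<Sum>l<n1. (\<Sum>m<d. u l m) + (if l = l0 then t - u l0 m0 else 0))"
  proof (rule sum.cong[OF refl])
    fix l assume "l \<in> {..<n1}"
    show "(\<Sum>m<d. (u(l0 := (u l0)(m0 := t))) l m) = (\<Sum>m<d. u l m) + (if l = l0 then t - u l0 m0 else 0)"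
    proof (cases "l = l0")
      case True
      have "(\<Sum>m<d. (u(l0 := (u l0)(m0 := t))) l m) = (\<Sum>m<d. u l m + (if m = m0 then t - u l0 m0 else 0))"
        using True by (intro sum.cong) (auto simp: algebra_simps)
      then show ?thesis using m0 True by (simp add: sum.distrib)
    qed simp
  qed
  then show ?thesis using l0 by (simp add: sum.distrib)
qed

lemma dU_Phi: assumes K: "0 < K" and pu: "pos u" and a: "a < n1" and b: "b < d" shows "dU \<Phi> w u a b = gU w u a b"
proof -
  have dR: "((\<lambda>t. (\<Sum>r'<K. \<Sum>l'<n1. w r' l') + (\<Sum>l'<n1. \<Sum>m<d. (u(a := (u a)(b := t))) l' m)) has_real_derivative 1) (at (u a b))"
    unfolding sumu_udir[OF a b] by (auto intro!: derivative_eq_intros)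
  have dF: "\<forall>s<n. \<forall>r'<K. ((\<lambda>t. f w (u(a := (u a)(b := t))) s r') has_real_derivative w r' a * (e u s a * x s b)) (at (u a b))"
    by (intro allI impI f_udir_deriv[OF pu _ a b])
  note D = Phi_deriv[OF K dF dR]
  have eq: "(1 / real n) * (\<Sum>s<n. w (y s) a * (e u s a * x s b) - (\<Sum>k<K. sm w (u(a := (u a)(b := u a b))) s k * (w k a * (e u s a * x s b))) + (\<Sum>r<K. w r a * (e u s a * x s b))) + \<epsilon>
     = gU w u a b"
  proof -
    have "(\<Sum>r<K. cc w u s r * (w r a * e u s a * x s b)) = w (y s) a * (e u s a * x s b) - (\<Sum>k<K. sm w u s k * (w k a * (e u s a * x s b))) + (\<Sum>r<K. w r a * (e u s a * x s b))"
      if s: "s < n" for s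
    proof -
      have d1: "(\<Sum>r<K. (if r = y s then 1 else 0) * (w r a * e u s a * x s b)) = w (y s) a * (e u s a * x s b)"
      proof -
        have "(\<Sum>r<K. (if r = y s then 1 else 0) * (w r a * e u s a * x s b)) = (\<Sum>r<K. if r = y s then w r a * e u s a * x s b else 0)"
          by (rule sum.cong) auto
        then show ?thesis using yK s by simp
      qed
      show ?thesis unfolding cc_def using d1
        by (simp add: algebra_simps sum.distrib sum_subtractf)
    qed
    then show ?thesis unfolding gU_def by simp
  qed
  show ?thesis unfolding dU_def by (rule DERIV_imp_deriv[OF D[unfolded eq]])
qed

end

context NN begin

lemma sm_nonneg: "0 \<le> sm w u s r"
  unfolding sm_def by (intro divide_nonneg_nonneg sum_nonneg) auto

lemma sm_sum: "0 < K \<Longrightarrow> (\<Sum>k<K. sm w u s k) = 1"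
proof -
  assume K: "0 < K"
  have "0 < (\<Sum>k<K. exp (f w u s k))" using K by (auto intro!: sum_pos)
  then show ?thesis unfolding sm_def by (simp add: sum_divide_distrib[symmetric])
qed

lemma sm_le1: assumes "r < K" shows "sm w u s r \<le> 1"
proof -
  have "sm w u s r \<le> (\<Sum>k<K. sm w u s k)" using assms sm_nonneg by (intro member_le_sum) auto
  then show ?thesis using sm_sum[of w u s] assms by simp
qed

lemma cc_ge: "r < K \<Longrightarrow> 1 - sm w u s r \<le> cc w u s r"
  unfolding cc_def by simp

lemma cc_nonneg: "r < K \<Longrightarrow> 0 \<le> cc w u s r"
  using cc_ge[of r w u s] sm_le1[of r w u s] by linarith

lemma h_nonneg: "0 \<le> h u s l" unfolding h_def by simp

lemma gW_pos: "r < K \<Longrightarrow> 0 < gW w u r l"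
  unfolding gW_def using epos npos
  by (intro add_nonneg_pos mult_nonneg_nonneg sum_nonneg) (auto intro: cc_nonneg h_nonneg)

lemma e_nonneg: "a < n1 \<Longrightarrow> 0 \<le> e u s a"
  unfolding e_def using \<alpha>1 by (auto intro!: mult_nonneg_nonneg)

lemma gU_pos: assumes "\<forall>r<K. 0 \<le> w r a" "a < n1" "b < d" "s0 < n" shows "0 < gU w u a b"
  unfolding gU_def using epos npos assms xnn
  by (intro add_nonneg_pos mult_nonneg_nonneg sum_nonneg) (auto intro!: cc_nonneg e_nonneg mult_nonneg_nonneg)

lemma GW_eq: assumes "i < K" "j < n1"
  shows "GW \<Phi> n1 \<rho>w pw i j w u = \<rho>w * psi (hconj pw) (gW w u i j) / (\<Sum>l<n1. \<bar>psi (hconj pw) (gW w u i l)\<bar> powr pw) powr (1/pw)"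
proof -
  have "(\<Sum>l<n1. \<bar>psi (hconj pw) (dW \<Phi> w u i l)\<bar> powr pw) = (\<Sum>l<n1. \<bar>psi (hconj pw) (gW w u i l)\<bar> powr pw)"
    using assms by (intro sum.cong) (auto simp: dW_Phi)
  then show ?thesis unfolding GW_def using assms by (simp add: dW_Phi)
qed

lemma GU_eq: assumes "0 < K" "pos u" "a < n1" "b < d"
  shows "GU \<Phi> n1 d \<rho>u pu a b w u = \<rho>u * psi (hconj pu) (gU w u a b) / (\<Sum>p\<in>{..<n1}\<times>{..<d}. \<bar>psi (hconj pu) (gU w u (fst p) (snd p))\<bar> powr pu) powr (1/pu)"
proof -
  have "(\<Sum>l<n1. \<Sum>m<d. \<bar>psi (hconj pu) (dU \<Phi> w u l m)\<bar> powr pu) = (\<Sum>l<n1. \<Sum>m<d. \<bar>psi (hconj pu) (gU w u l m)\<bar> powr pu)"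
    using assms by (intro sum.cong refl) (auto simp: dU_Phi)
  also have "\<dots> = (\<Sum>p\<in>{..<n1}\<times>{..<d}. \<bar>psi (hconj pu) (gU w u (fst p) (snd p))\<bar> powr pu)"
    by (simp add: sum.cartesian_product split_beta)
  finally show ?thesis unfolding GU_def using assms by (simp add: dU_Phi)
qed

lemma gW_deriv:
  assumes i: "i < K"
    and dF: "\<forall>s<n. \<forall>r<K. ((\<lambda>t. f (W t) (U t) s r) has_real_derivative Fd s r) (at t0)"
    and dH: "\<forall>s<n. ((\<lambda>t. h (U t) s j) has_real_derivative Hd s) (at t0)"
  shows "((\<lambda>t. gW (W t) (U t) i j) has_real_derivative (1 / real n) * (\<Sum>s<n.
      (- (sm (W t0) (U t0) s i * (Fd s i - (\<Sum>k<K. sm (W t0) (U t0) s k * Fd s k)))) * h (U t0) s j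
      + cc (W t0) (U t0) s i * Hd s)) (at t0)"
proof -
  have each: "((\<lambda>t. cc (W t) (U t) s i * h (U t) s j) has_real_derivative
      (- (sm (W t0) (U t0) s i * (Fd s i - (\<Sum>k<K. sm (W t0) (U t0) s k * Fd s k)))) * h (U t0) s j
      + cc (W t0) (U t0) s i * Hd s) (at t0)" if s: "s < n" for s
  proof -
    have dF': "\<forall>k<K. ((\<lambda>t. f (W t) (U t) s k) has_real_derivative Fd s k) (at t0)" using dF s by auto
    have dsm: "((\<lambda>t. sm (W t) (U t) s i) has_real_derivative sm (W t0) (U t0) s i * (Fd s i - (\<Sum>k<K. sm (W t0) (U t0) s k * Fd s k))) (at t0)"
      using softmax_deriv[OF i dF'] unfolding sm_def .
    have dcc: "((\<lambda>t. cc (W t) (U t) s i) has_real_derivative - (sm (W t0) (U t0) s i * (Fd s i - (\<Sum>k<K. sm (W t0) (U t0) s k * Fd s k)))) (at t0)"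
      unfolding cc_def using DERIV_add[OF DERIV_diff[OF DERIV_const dsm] DERIV_const] by simp
    show ?thesis using DERIV_mult[OF dcc dH[rule_format, OF s]] by (simp add: mult.commute)
  qed
  have "((\<lambda>t. (\<Sum>s<n. cc (W t) (U t) s i * h (U t) s j)) has_real_derivative (\<Sum>s<n.
      (- (sm (W t0) (U t0) s i * (Fd s i - (\<Sum>k<K. sm (W t0) (U t0) s k * Fd s k)))) * h (U t0) s j
      + cc (W t0) (U t0) s i * Hd s)) (at t0)"
    using each by (intro DERIV_sum) auto
  from DERIV_add[OF DERIV_cmult[OF this, of "1 / real n"] DERIV_const[of \<epsilon>]]
  show ?thesis unfolding gW_def by simp
qed

lemma gU_deriv:
  assumes dF: "\<forall>s<n. \<forall>r<K. ((\<lambda>t. f (W t) (U t) s r) has_real_derivative Fd s r) (at t0)"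
    and dP: "\<forall>s<n. \<forall>r<K. ((\<lambda>t. W t r a * e (U t) s a * x s b) has_real_derivative Pd s r) (at t0)"
  shows "((\<lambda>t. gU (W t) (U t) a b) has_real_derivative (1 / real n) * (\<Sum>s<n. \<Sum>r<K.
      (- (sm (W t0) (U t0) s r * (Fd s r - (\<Sum>k<K. sm (W t0) (U t0) s k * Fd s k)))) * (W t0 r a * e (U t0) s a * x s b)
      + cc (W t0) (U t0) s r * Pd s r)) (at t0)"
proof -
  have each: "((\<lambda>t. cc (W t) (U t) s r * (W t r a * e (U t) s a * x s b)) has_real_derivative
      (- (sm (W t0) (U t0) s r * (Fd s r - (\<Sum>k<K. sm (W t0) (U t0) s k * Fd s k)))) * (W t0 r a * e (U t0) s a * x s b)
      + cc (W t0) (U t0) s r * Pd s r) (at t0)" if s: "s < n" and r: "r < K" for s r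
  proof -
    have dF': "\<forall>k<K. ((\<lambda>t. f (W t) (U t) s k) has_real_derivative Fd s k) (at t0)" using dF s by auto
    have dsm: "((\<lambda>t. sm (W t) (U t) s r) has_real_derivative sm (W t0) (U t0) s r * (Fd s r - (\<Sum>k<K. sm (W t0) (U t0) s k * Fd s k))) (at t0)"
      using softmax_deriv[OF r dF'] unfolding sm_def .
    have dcc: "((\<lambda>t. cc (W t) (U t) s r) has_real_derivative - (sm (W t0) (U t0) s r * (Fd s r - (\<Sum>k<K. sm (W t0) (U t0) s k * Fd s k)))) (at t0)"
      unfolding cc_def using DERIV_add[OF DERIV_diff[OF DERIV_const dsm] DERIV_const] by simp
    show ?thesis using DERIV_mult[OF dcc dP[rule_format, OF s r]] by (simp add: mult.commute)
  qed
  have "((\<lambda>t. (\<Sum>s<n. \<Sum>r<K. cc (W t) (U t) s r * (W t r a * e (U t) s a * x s b))) has_real_derivative (\<Sum>s<n. \<Sum>r<K.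
      (- (sm (W t0) (U t0) s r * (Fd s r - (\<Sum>k<K. sm (W t0) (U t0) s k * Fd s k)))) * (W t0 r a * e (U t0) s a * x s b)
      + cc (W t0) (U t0) s r * Pd s r)) (at t0)"
    using each by (intro DERIV_sum) auto
  from DERIV_add[OF DERIV_cmult[OF this, of "1 / real n"] DERIV_const[of \<epsilon>]]
  show ?thesis unfolding gU_def by simp
qed

end

lemma powr_step: fixes Z :: real assumes "0 < Z" shows "Z powr (a - 1) * Z = Z powr a"
proof -
  have "Z powr (a - 1) * Z powr 1 = Z powr ((a - 1) + 1)" by (simp only: powr_add)
  then show ?thesis using assms by simp
qed

locale NN2 = NN +
  fixes pw pu \<rho>w \<rho>u :: real and w u :: "nat \<Rightarrow> nat \<Rightarrow> real"
  assumes pw: "1 < pw" and pu: "1 < pu" and rw: "0 < \<rho>w" and ru: "0 < \<rho>u"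
    and B: "(w, u) \<in> Bpp K n1 d pw pu \<rho>w \<rho>u"
begin

definition "Cw = \<rho>w * PsiA n1 \<alpha> (hconj pw) pu (\<lambda>_. 1) (\<rho>u * rhoX n d x pu)"
definition "Cu = \<rho>w * PsiA n1 \<alpha> (hconj pw) pu \<alpha> (\<rho>u * rhoX n d x pu)"
definition "an = Max ((\<lambda>l. \<bar>\<alpha> l\<bar>) ` {..<n1})"

lemma wpos: "\<forall>r<K. \<forall>l<n1. 0 < w r l" using B by (simp add: Bpp_def)
lemma upos: "pos u" using B by (simp add: Bpp_def pos_def)
lemma unorm: "(\<Sum>l<n1. \<Sum>m<d. \<bar>u l m\<bar> powr pu) powr (1 / pu) \<le> \<rho>u" using B by (simp add: Bpp_def)
lemma wnorm: "\<forall>r<K. (\<Sum>l<n1. \<bar>w r l\<bar> powr pw) powr (1 / pw) \<le> \<rho>w" using B by (simp add: Bpp_def)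

lemma Cw0: "0 \<le> Cw" unfolding Cw_def PsiA_def Let_def using rw by simp
lemma Cu0: "0 \<le> Cu" unfolding Cu_def PsiA_def Let_def using rw by simp

lemma an_ge: "l < n1 \<Longrightarrow> \<alpha> l \<le> an"
  unfolding an_def by (rule order_trans[OF abs_ge_self]) (auto intro!: Max_ge)

lemma psi_gen:
  assumes k: "k < K" and s: "s < n" and \<delta>0: "\<forall>l<n1. 0 \<le> \<delta> l"
  shows "(\<Sum>l<n1. w k l * (\<delta> l * h u s l)) \<le> \<rho>w * PsiA n1 \<alpha> (hconj pw) pu \<delta> (\<rho>u * rhoX n d x pu)"
proof -
  have xn: "(\<Sum>m<d. \<bar>x s m\<bar> powr hconj pu) powr (1/hconj pu) \<le> rhoX n d x pu"
    unfolding rhoX_def using s by (intro Max_ge) auto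
  have "(\<Sum>l<n1. w k l * (\<delta> l * (\<Sum>m<d. u l m * x s m) powr \<alpha> l)) \<le> \<rho>w * PsiA n1 \<alpha> (hconj pw) pu \<delta> (\<rho>u * rhoX n d x pu)"
    by (rule psi_bound[OF pw pu _ _ _ unorm ru _ xn \<delta>0 \<alpha>1])
       (use wpos k wnorm upos xnn s in \<open>auto simp: pos_def less_imp_le\<close>)
  then show ?thesis unfolding h_def z_def .
qed

lemma f_le: "k < K \<Longrightarrow> s < n \<Longrightarrow> f w u s k \<le> Cw"
  using psi_gen[of k s "\<lambda>_. 1"] unfolding Cw_def f_def by simp

lemma phi_le: "k < K \<Longrightarrow> s < n \<Longrightarrow> (\<Sum>l<n1. w k l * (\<alpha> l * h u s l)) \<le> Cu"
  using psi_gen[of k s \<alpha>] \<alpha>1 unfolding Cu_def by force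

lemma e_z: "s < n \<Longrightarrow> l < n1 \<Longrightarrow> e u s l * z u s l = \<alpha> l * h u s l"
proof -
  assume s: "s < n" and l: "l < n1"
  have z0: "0 \<le> z u s l" using z_nonneg[OF upos s l] .
  show ?thesis
  proof (cases "z u s l = 0")
    case False
    then have "0 < z u s l" using z0 by simp
    then show ?thesis unfolding e_def h_def using powr_step[of "z u s l" "\<alpha> l"] by (simp add: mult.assoc)
  qed (simp add: e_def h_def)
qed

lemma ed_z: "s < n \<Longrightarrow> l < n1 \<Longrightarrow> \<alpha> l * ((\<alpha> l - 1) * z u s l powr (\<alpha> l - 2)) * z u s l = (\<alpha> l - 1) * e u s l"
proof -
  assume s: "s < n" and l: "l < n1"
  have z0: "0 \<le> z u s l" using z_nonneg[OF upos s l] .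
  show ?thesis
  proof (cases "z u s l = 0")
    case False
    then have zp: "0 < z u s l" using z0 by simp
    have "z u s l powr (\<alpha> l - 2) * z u s l = z u s l powr (\<alpha> l - 1)"
      using zp powr_step[of "z u s l" "\<alpha> l - 1"] by simp
    then show ?thesis unfolding e_def by (simp add: algebra_simps)
  qed (simp add: e_def)
qed

end

context NN2 begin

lemma GW_nonneg: "i < K \<Longrightarrow> j < n1 \<Longrightarrow> 0 \<le> GW \<Phi> n1 \<rho>w pw i j w u"
  using gW_pos[of i w u j] rw unfolding GW_eq psi_def by (simp add: divide_nonneg_nonneg)

lemma part1:
  assumes i: "i < K" and k: "k < K" and j: "j < n1"
  shows "(\<Sum>l<n1. \<bar>dW (GW \<Phi> n1 \<rho>w pw i j) w u k l\<bar> * w k l) \<le> Amat K pw pu Cw Cu an i k * GW \<Phi> n1 \<rho>w pw i j w u"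
proof -
  define q where "q = hconj pw"
  have q1: "1 < q" unfolding q_def using hconj_facts[OF pw] by simp
  define F0 where "F0 = GW \<Phi> n1 \<rho>w pw i j w u"
  define Fd where "Fd l0 s r = (if r = k then h u s l0 else 0)" for l0 s r
  define cd where "cd l0 s r = - (sm w u s r * (Fd l0 s r - (\<Sum>k'<K. sm w u s k' * Fd l0 s k')))" for l0 s r
  define D where "D l0 l = (1 / real n) * (\<Sum>s<n. cd l0 s i * h u s l + cc w u s i * 0)" for l0 l
  have dg: "((\<lambda>t. gW (w(k := (w k)(l0 := t))) u i l) has_real_derivative D l0 l) (at (w k l0))" if l0: "l0 < n1" for l0 l
  proof -
    have dF: "\<forall>s<n. \<forall>r<K. ((\<lambda>t. f (w(k := (w k)(l0 := t))) u s r) has_real_derivative Fd l0 s r) (at (w k l0))"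
      unfolding Fd_def by (intro allI impI f_wdir_deriv[OF l0])
    have dH: "\<forall>s<n. ((\<lambda>t. h u s l) has_real_derivative 0) (at (w k l0))" by simp
    show ?thesis by (rule DERIV_cong[OF gW_deriv[OF i dF dH]]) (simp add: D_def cd_def)
  qed
  have dv: "dW (GW \<Phi> n1 \<rho>w pw i j) w u k l0 = F0 * (q - 1) * (D l0 j / gW w u i j
      - (\<Sum>l\<in>{..<n1}. (gW w u i l powr q / (\<Sum>l'\<in>{..<n1}. gW w u i l' powr q)) * (D l0 l / gW w u i l)))" if l0: "l0 < n1" for l0
  proof -
    have "((\<lambda>t. \<rho>w * psi (hconj pw) (gW (w(k := (w k)(l0 := t))) u i j) / (\<Sum>l\<in>{..<n1}. \<bar>psi (hconj pw) (gW (w(k := (w k)(l0 := t))) u i l)\<bar> powr pw) powr (1/pw))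
      has_real_derivative
      (\<rho>w * psi (hconj pw) (gW (w(k := (w k)(l0 := w k l0))) u i j) / (\<Sum>l\<in>{..<n1}. \<bar>psi (hconj pw) (gW (w(k := (w k)(l0 := w k l0))) u i l)\<bar> powr pw) powr (1/pw))
      * (hconj pw - 1) * (D l0 j / gW (w(k := (w k)(l0 := w k l0))) u i j - (\<Sum>l\<in>{..<n1}. (gW (w(k := (w k)(l0 := w k l0))) u i l powr hconj pw / (\<Sum>l'\<in>{..<n1}. gW (w(k := (w k)(l0 := w k l0))) u i l' powr hconj pw)) * (D l0 l / gW (w(k := (w k)(l0 := w k l0))) u i l)))) (at (w k l0))"
      by (rule quot_deriv[where g="\<lambda>l t. gW (w(k := (w k)(l0 := t))) u i l"]) (use j pw dg[OF l0] gW_pos[OF i] in auto)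
    then have "((\<lambda>t. GW \<Phi> n1 \<rho>w pw i j (w(k := (w k)(l0 := t))) u) has_real_derivative F0 * (q - 1) * (D l0 j / gW w u i j
      - (\<Sum>l\<in>{..<n1}. (gW w u i l powr q / (\<Sum>l'\<in>{..<n1}. gW w u i l' powr q)) * (D l0 l / gW w u i l)))) (at (w k l0))"
      unfolding GW_eq[OF i j] F0_def q_def by simp
    then show ?thesis unfolding dW_def by (rule DERIV_imp_deriv)
  qed
  have Db: "\<forall>l\<in>{..<n1}. (\<Sum>l0\<in>{..<n1}. \<bar>D l0 l\<bar> * w k l0) \<le> (2 * Cw) * gW w u i l"
  proof
    fix l assume l: "l \<in> {..<n1}"
    have cdb: "\<forall>s\<in>{..<n}. \<forall>r\<in>{i}. (\<Sum>l0\<in>{..<n1}. \<bar>cd l0 s r\<bar> * w k l0) \<le> 2 * Cw * cc w u s r"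
    proof (intro ballI)
      fix s r assume s: "s \<in> {..<n}" and r: "r \<in> {i}"
      have Fb: "\<forall>k'<K. (\<Sum>l0\<in>{..<n1}. \<bar>Fd l0 s k'\<bar> * w k l0) \<le> Cw"
      proof (intro allI impI)
        fix k' assume k': "k' < K"
        show "(\<Sum>l0\<in>{..<n1}. \<bar>Fd l0 s k'\<bar> * w k l0) \<le> Cw"
        proof (cases "k' = k")
          case True
          have "(\<Sum>l0\<in>{..<n1}. \<bar>Fd l0 s k'\<bar> * w k l0) = f w u s k"
            unfolding Fd_def f_def using True by (intro sum.cong) (auto simp: h_nonneg mult.commute)
          then show ?thesis using f_le[OF k] s by simp
        qed (simp add: Fd_def Cw0)
      qed
      have "(\<Sum>l0\<in>{..<n1}. \<bar>sm w u s i * (Fd l0 s i - (\<Sum>k'<K. sm w u s k' * Fd l0 s k'))\<bar> * w k l0) \<le> 2 * (1 - sm w u s i) * Cw"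
        by (rule cd_bound[OF _ _ i _ _ Fb]) (use wpos k sm_nonneg sm_sum[of w u s] i in \<open>auto simp: less_imp_le\<close>)
      also have "\<dots> \<le> 2 * Cw * cc w u s i" using mult_left_mono[OF cc_ge[OF i, of w u s] Cw0] by (simp add: algebra_simps)
      finally show "(\<Sum>l0\<in>{..<n1}. \<bar>cd l0 s r\<bar> * w k l0) \<le> 2 * Cw * cc w u s r" using r by (simp add: cd_def)
    qed
    have "(\<Sum>l0\<in>{..<n1}. \<bar>(1 / real n) * (\<Sum>s\<in>{..<n}. \<Sum>r\<in>{i}. cd l0 s r * h u s l + cc w u s r * 0)\<bar> * w k l0)
      \<le> (2 * Cw + 0) * ((1 / real n) * (\<Sum>s\<in>{..<n}. \<Sum>r\<in>{i}. cc w u s r * h u s l) + \<epsilon>)"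
      by (rule g_bound) (use wpos k cc_nonneg[OF i] h_nonneg cdb Cw0 epos in \<open>auto simp: less_imp_le\<close>)
    then show "(\<Sum>l0\<in>{..<n1}. \<bar>D l0 l\<bar> * w k l0) \<le> (2 * Cw) * gW w u i l"
      by (simp add: D_def gW_def)
  qed
  have "(\<Sum>l<n1. \<bar>dW (GW \<Phi> n1 \<rho>w pw i j) w u k l\<bar> * w k l)
      = (\<Sum>l0\<in>{..<n1}. \<bar>F0 * (q - 1) * (D l0 j / gW w u i j - (\<Sum>l\<in>{..<n1}. (gW w u i l powr q / (\<Sum>l'\<in>{..<n1}. gW w u i l' powr q)) * (D l0 l / gW w u i l)))\<bar> * w k l0)"
    by (intro sum.cong) (auto simp: dv)
  also have "\<dots> \<le> 2 * (q - 1) * (2 * Cw) * F0"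
    by (rule quot_bound[where g="gW w u i"]) (use j gW_pos[OF i] GW_nonneg[OF i j] q1 wpos k Db in \<open>auto simp: F0_def less_imp_le\<close>)
  also have "\<dots> = Amat K pw pu Cw Cu an i k * GW \<Phi> n1 \<rho>w pw i j w u"
    unfolding Amat_def F0_def q_def using i k by simp
  finally show ?thesis .
qed

end

context NN2 begin

lemma prod_sum: "(\<Sum>c\<in>{..<n1}\<times>{..<d}. G (fst c) (snd c)) = (\<Sum>l<n1. \<Sum>m<d. G l m)"
  by (simp add: sum.cartesian_product split_beta)

lemma ez_sum: "s < n \<Longrightarrow> l < n1 \<Longrightarrow> (\<Sum>m<d. e u s l * x s m * u l m) = \<alpha> l * h u s l"
proof -
  assume s: "s < n" and l: "l < n1"
  have "(\<Sum>m<d. e u s l * x s m * u l m) = e u s l * z u s l"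
    unfolding z_def by (simp add: sum_distrib_left mult_ac)
  then show ?thesis using e_z[OF s l] by simp
qed

lemma phi_prod: assumes k: "k < K" and s: "s < n"
  shows "(\<Sum>c\<in>{..<n1}\<times>{..<d}. \<bar>w k (fst c) * (e u s (fst c) * x s (snd c))\<bar> * u (fst c) (snd c)) = (\<Sum>l<n1. w k l * (\<alpha> l * h u s l))"
proof -
  have "(\<Sum>c\<in>{..<n1}\<times>{..<d}. \<bar>w k (fst c) * (e u s (fst c) * x s (snd c))\<bar> * u (fst c) (snd c))
     = (\<Sum>l<n1. \<Sum>m<d. \<bar>w k l * (e u s l * x s m)\<bar> * u l m)" by (rule prod_sum)
  also have "\<dots> = (\<Sum>l<n1. w k l * (\<Sum>m<d. e u s l * x s m * u l m))"
  proof (rule sum.cong[OF refl])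
    fix l assume l: "l \<in> {..<n1}"
    show "(\<Sum>m<d. \<bar>w k l * (e u s l * x s m)\<bar> * u l m) = w k l * (\<Sum>m<d. e u s l * x s m * u l m)"
      unfolding sum_distrib_left
    proof (rule sum.cong[OF refl])
      fix m assume m: "m \<in> {..<d}"
      have "0 \<le> w k l" using wpos k l by (simp add: less_imp_le)
      moreover have "0 \<le> e u s l" using e_nonneg l by simp
      moreover have "0 \<le> x s m" using xnn s m by simp
      ultimately have "0 \<le> w k l * (e u s l * x s m)" by simp
      then show "\<bar>w k l * (e u s l * x s m)\<bar> * u l m = w k l * (e u s l * x s m * u l m)" by (simp add: mult_ac)
    qed
  qed
  also have "\<dots> = (\<Sum>l<n1. w k l * (\<alpha> l * h u s l))" using ez_sum s by (intro sum.cong) auto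
  finally show ?thesis .
qed

lemma hd_prod: assumes s: "s < n" and l: "l < n1"
  shows "(\<Sum>c\<in>{..<n1}\<times>{..<d}. \<bar>if l = fst c then e u s (fst c) * x s (snd c) else 0\<bar> * u (fst c) (snd c)) = \<alpha> l * h u s l"
proof -
  have "(\<Sum>c\<in>{..<n1}\<times>{..<d}. \<bar>if l = fst c then e u s (fst c) * x s (snd c) else 0\<bar> * u (fst c) (snd c))
     = (\<Sum>l'<n1. \<Sum>m<d. \<bar>if l = l' then e u s l' * x s m else 0\<bar> * u l' m)" by (rule prod_sum)
  also have "\<dots> = (\<Sum>l'<n1. if l = l' then (\<Sum>m<d. e u s l * x s m * u l m) else 0)"
  proof (rule sum.cong[OF refl])
    fix l' assume l': "l' \<in> {..<n1}"
    show "(\<Sum>m<d. \<bar>if l = l' then e u s l' * x s m else 0\<bar> * u l' m) = (if l = l' then (\<Sum>m<d. e u s l * x s m * u l m) else 0)"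
    proof (cases "l = l'")
      case True
      have "(\<Sum>m<d. \<bar>e u s l * x s m\<bar> * u l m) = (\<Sum>m<d. e u s l * x s m * u l m)"
        using e_nonneg[OF l, of u s] xnn s by (intro sum.cong) auto
      then show ?thesis using True by simp
    qed simp
  qed
  also have "\<dots> = \<alpha> l * h u s l" using l ez_sum[OF s l] by simp
  finally show ?thesis .
qed

lemma part2:
  assumes i: "i < K" and j: "j < n1"
  shows "(\<Sum>l<n1. \<Sum>m<d. \<bar>dU (GW \<Phi> n1 \<rho>w pw i j) w u l m\<bar> * u l m) \<le> Amat K pw pu Cw Cu an i K * GW \<Phi> n1 \<rho>w pw i j w u"
proof -
  define q where "q = hconj pw"
  have q1: "1 < q" unfolding q_def using hconj_facts[OF pw] by simp
  define C where "C = {..<n1}\<times>{..<d}"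
  define F0 where "F0 = GW \<Phi> n1 \<rho>w pw i j w u"
  define Fd where "Fd c s r = w r (fst c) * (e u s (fst c) * x s (snd c))" for c :: "nat \<times> nat" and s r
  define Hd where "Hd c s l = (if l = fst c then e u s (fst c) * x s (snd c) else 0)" for c :: "nat \<times> nat" and s l
  define cd where "cd c s r = - (sm w u s r * (Fd c s r - (\<Sum>k'<K. sm w u s k' * Fd c s k')))" for c s r
  define D where "D c l = (1 / real n) * (\<Sum>s<n. cd c s i * h u s l + cc w u s i * Hd c s l)" for c l
  have dg: "((\<lambda>t. gW w (u(l0 := (u l0)(m0 := t))) i l) has_real_derivative D (l0, m0) l) (at (u l0 m0))"
    if l0: "l0 < n1" and m0: "m0 < d" for l0 m0 l
  proof -
    have dF: "\<forall>s<n. \<forall>r<K. ((\<lambda>t. f w (u(l0 := (u l0)(m0 := t))) s r) has_real_derivative Fd (l0, m0) s r) (at (u l0 m0))"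
      unfolding Fd_def by (intro allI impI) (simp add: f_udir_deriv[OF upos _ l0 m0])
    have dH: "\<forall>s<n. ((\<lambda>t. h (u(l0 := (u l0)(m0 := t))) s l) has_real_derivative Hd (l0, m0) s l) (at (u l0 m0))"
      unfolding Hd_def fst_conv snd_conv by (intro allI impI h_udir_deriv[OF upos _ l0 m0])
    show ?thesis by (rule DERIV_cong[OF gW_deriv[OF i dF dH]]) (simp add: D_def cd_def)
  qed
  have dv: "dU (GW \<Phi> n1 \<rho>w pw i j) w u l0 m0 = F0 * (q - 1) * (D (l0, m0) j / gW w u i j
      - (\<Sum>l\<in>{..<n1}. (gW w u i l powr q / (\<Sum>l'\<in>{..<n1}. gW w u i l' powr q)) * (D (l0, m0) l / gW w u i l)))"
    if l0: "l0 < n1" and m0: "m0 < d" for l0 m0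
  proof -
    have "((\<lambda>t. \<rho>w * psi (hconj pw) (gW w (u(l0 := (u l0)(m0 := t))) i j) / (\<Sum>l\<in>{..<n1}. \<bar>psi (hconj pw) (gW w (u(l0 := (u l0)(m0 := t))) i l)\<bar> powr pw) powr (1/pw))
      has_real_derivative
      (\<rho>w * psi (hconj pw) (gW w (u(l0 := (u l0)(m0 := u l0 m0))) i j) / (\<Sum>l\<in>{..<n1}. \<bar>psi (hconj pw) (gW w (u(l0 := (u l0)(m0 := u l0 m0))) i l)\<bar> powr pw) powr (1/pw))
      * (hconj pw - 1) * (D (l0, m0) j / gW w (u(l0 := (u l0)(m0 := u l0 m0))) i j - (\<Sum>l\<in>{..<n1}. (gW w (u(l0 := (u l0)(m0 := u l0 m0))) i l powr hconj pw / (\<Sum>l'\<in>{..<n1}. gW w (u(l0 := (u l0)(m0 := u l0 m0))) i l' powr hconj pw)) * (D (l0, m0) l / gW w (u(l0 := (u l0)(m0 := u l0 m0))) i l)))) (at (u l0 m0))"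
      by (rule quot_deriv[where g="\<lambda>l t. gW w (u(l0 := (u l0)(m0 := t))) i l"]) (use j pw dg[OF l0 m0] gW_pos[OF i] in auto)
    then have "((\<lambda>t. GW \<Phi> n1 \<rho>w pw i j w (u(l0 := (u l0)(m0 := t)))) has_real_derivative F0 * (q - 1) * (D (l0, m0) j / gW w u i j
      - (\<Sum>l\<in>{..<n1}. (gW w u i l powr q / (\<Sum>l'\<in>{..<n1}. gW w u i l' powr q)) * (D (l0, m0) l / gW w u i l)))) (at (u l0 m0))"
      unfolding GW_eq[OF i j] F0_def q_def by simp
    then show ?thesis unfolding dU_def by (rule DERIV_imp_deriv)
  qed
  have Db: "\<forall>l\<in>{..<n1}. (\<Sum>c\<in>C. \<bar>D c l\<bar> * u (fst c) (snd c)) \<le> (2 * Cu + an) * gW w u i l"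
  proof
    fix l assume l: "l \<in> {..<n1}"
    have cdb: "\<forall>s\<in>{..<n}. \<forall>r\<in>{i}. (\<Sum>c\<in>C. \<bar>cd c s r\<bar> * u (fst c) (snd c)) \<le> 2 * Cu * cc w u s r"
    proof (intro ballI)
      fix s r assume s: "s \<in> {..<n}" and r: "r \<in> {i}"
      have Fb: "\<forall>k'<K. (\<Sum>c\<in>C. \<bar>Fd c s k'\<bar> * u (fst c) (snd c)) \<le> Cu"
        unfolding Fd_def C_def using phi_prod phi_le s by auto
      have "(\<Sum>c\<in>C. \<bar>sm w u s i * (Fd c s i - (\<Sum>k'<K. sm w u s k' * Fd c s k'))\<bar> * u (fst c) (snd c)) \<le> 2 * (1 - sm w u s i) * Cu"
        by (rule cd_bound[OF _ _ i _ _ Fb]) (use upos sm_nonneg sm_sum[of w u s] i in \<open>auto simp: C_def pos_def less_imp_le\<close>)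
      also have "\<dots> \<le> 2 * Cu * cc w u s i" using mult_left_mono[OF cc_ge[OF i, of w u s] Cu0] by (simp add: algebra_simps)
      finally show "(\<Sum>c\<in>C. \<bar>cd c s r\<bar> * u (fst c) (snd c)) \<le> 2 * Cu * cc w u s r" using r by (simp add: cd_def)
    qed
    have Pdb: "\<forall>s\<in>{..<n}. \<forall>r\<in>{i}. (\<Sum>c\<in>C. \<bar>Hd c s l\<bar> * u (fst c) (snd c)) \<le> an * h u s l"
    proof (intro ballI)
      fix s r assume s: "s \<in> {..<n}" and r: "r \<in> {i}"
      have "(\<Sum>c\<in>C. \<bar>Hd c s l\<bar> * u (fst c) (snd c)) = \<alpha> l * h u s l"
        unfolding Hd_def C_def using hd_prod s l by auto
      also have "\<dots> \<le> an * h u s l" using an_ge l h_nonneg by (intro mult_right_mono) auto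
      finally show "(\<Sum>c\<in>C. \<bar>Hd c s l\<bar> * u (fst c) (snd c)) \<le> an * h u s l" .
    qed
    have an0: "0 \<le> an" using an_ge[of 0] j \<alpha>1 by force
    have "(\<Sum>c\<in>C. \<bar>(1 / real n) * (\<Sum>s\<in>{..<n}. \<Sum>r\<in>{i}. cd c s r * h u s l + cc w u s r * Hd c s l)\<bar> * u (fst c) (snd c))
      \<le> (2 * Cu + an) * ((1 / real n) * (\<Sum>s\<in>{..<n}. \<Sum>r\<in>{i}. cc w u s r * h u s l) + \<epsilon>)"
      by (rule g_bound[where Pd="\<lambda>c s r. Hd c s l"]) (use upos cc_nonneg[OF i] h_nonneg cdb Pdb Cu0 an0 epos in \<open>auto simp: C_def pos_def less_imp_le\<close>)
    then show "(\<Sum>c\<in>C. \<bar>D c l\<bar> * u (fst c) (snd c)) \<le> (2 * Cu + an) * gW w u i l"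
      by (simp add: D_def gW_def)
  qed
  have "(\<Sum>l<n1. \<Sum>m<d. \<bar>dU (GW \<Phi> n1 \<rho>w pw i j) w u l m\<bar> * u l m)
      = (\<Sum>c\<in>C. \<bar>dU (GW \<Phi> n1 \<rho>w pw i j) w u (fst c) (snd c)\<bar> * u (fst c) (snd c))"
    unfolding C_def by (rule prod_sum[symmetric])
  also have "\<dots> = (\<Sum>c\<in>C. \<bar>F0 * (q - 1) * (D c j / gW w u i j - (\<Sum>l\<in>{..<n1}. (gW w u i l powr q / (\<Sum>l'\<in>{..<n1}. gW w u i l' powr q)) * (D c l / gW w u i l)))\<bar> * u (fst c) (snd c))"
    by (intro sum.cong) (auto simp: dv C_def)
  also have "\<dots> \<le> 2 * (q - 1) * (2 * Cu + an) * F0"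
    by (rule quot_bound[where g="gW w u i"]) (use j gW_pos[OF i] GW_nonneg[OF i j] q1 upos Db in \<open>auto simp: F0_def C_def pos_def less_imp_le\<close>)
  also have "\<dots> = Amat K pw pu Cw Cu an i K * GW \<Phi> n1 \<rho>w pw i j w u"
    unfolding Amat_def F0_def q_def using i by simp
  finally show ?thesis .
qed

end

context NN2 begin

lemma gU_pos2: "a < n1 \<Longrightarrow> b < d \<Longrightarrow> 0 < gU w u a b"
  using gU_pos[of w a b 0] wpos npos by (auto simp: less_imp_le)

lemma GU_nonneg: "0 < K \<Longrightarrow> a < n1 \<Longrightarrow> b < d \<Longrightarrow> 0 \<le> GU \<Phi> n1 d \<rho>u pu a b w u"
  using gU_pos2[of a b] ru unfolding GU_eq[OF _ upos] psi_def by (simp add: divide_nonneg_nonneg)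

lemma P_nonneg: "r < K \<Longrightarrow> a < n1 \<Longrightarrow> b < d \<Longrightarrow> s < n \<Longrightarrow> 0 \<le> w r a * e u s a * x s b"
proof -
  assume "r < K" "a < n1" "b < d" "s < n"
  then have "0 \<le> w r a" "0 \<le> e u s a" "0 \<le> x s b" using wpos e_nonneg xnn by (auto simp: less_imp_le)
  then show ?thesis by simp
qed

lemma cdb_gen:
  assumes r: "r < K" and s: "s < n" and finC: "finite C" and v0: "\<forall>c\<in>C. 0 \<le> v c"
    and Fb: "\<forall>k'<K. (\<Sum>c\<in>C. \<bar>Fd c k'\<bar> * v c) \<le> Cd" and Cd0: "0 \<le> Cd"
  shows "(\<Sum>c\<in>C. \<bar>- (sm w u s r * (Fd c r - (\<Sum>k'<K. sm w u s k' * Fd c k')))\<bar> * v c) \<le> 2 * Cd * cc w u s r"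
proof -
  have "(\<Sum>c\<in>C. \<bar>sm w u s r * (Fd c r - (\<Sum>k'<K. sm w u s k' * Fd c k'))\<bar> * v c) \<le> 2 * (1 - sm w u s r) * Cd"
    by (rule cd_bound[OF finC v0 r _ _ Fb]) (use sm_nonneg sm_sum[of w u s] r in auto)
  also have "\<dots> \<le> 2 * Cd * cc w u s r" using mult_left_mono[OF cc_ge[OF r, of w u s] Cd0] by (simp add: algebra_simps)
  finally show ?thesis by simp
qed

lemma part3:
  assumes k: "k < K" and a: "a < n1" and b: "b < d"
  shows "(\<Sum>l<n1. \<bar>dW (GU \<Phi> n1 d \<rho>u pu a b) w u k l\<bar> * w k l) \<le> Amat K pw pu Cw Cu an K k * GU \<Phi> n1 d \<rho>u pu a b w u"
proof -
  have K: "0 < K" using k by simp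
  define q where "q = hconj pu"
  have q1: "1 < q" unfolding q_def using hconj_facts[OF pu] by simp
  define I where "I = {..<n1}\<times>{..<d}"
  have ab: "(a, b) \<in> I" using a b by (simp add: I_def)
  define F0 where "F0 = GU \<Phi> n1 d \<rho>u pu a b w u"
  define Fd where "Fd l0 s r = (if r = k then h u s l0 else 0)" for l0 s r
  define Pd where "Pd l0 s r p = (if r = k \<and> fst p = l0 then e u s (fst p) * x s (snd p) else 0)" for l0 s r and p :: "nat \<times> nat"
  define cd where "cd l0 s r = - (sm w u s r * (Fd l0 s r - (\<Sum>k'<K. sm w u s k' * Fd l0 s k')))" for l0 s r
  define D where "D l0 p = (1 / real n) * (\<Sum>s<n. \<Sum>r<K. cd l0 s r * (w r (fst p) * e u s (fst p) * x s (snd p)) + cc w u s r * Pd l0 s r p)" for l0 p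
  have dg: "((\<lambda>t. gU (w(k := (w k)(l0 := t))) u (fst p) (snd p)) has_real_derivative D l0 p) (at (w k l0))" if l0: "l0 < n1" for l0 p
  proof -
    have dF: "\<forall>s<n. \<forall>r<K. ((\<lambda>t. f (w(k := (w k)(l0 := t))) u s r) has_real_derivative Fd l0 s r) (at (w k l0))"
      unfolding Fd_def by (intro allI impI f_wdir_deriv[OF l0])
    have dP: "\<forall>s<n. \<forall>r<K. ((\<lambda>t. (w(k := (w k)(l0 := t))) r (fst p) * e u s (fst p) * x s (snd p)) has_real_derivative Pd l0 s r p) (at (w k l0))"
    proof (intro allI impI)
      fix s r assume "s < n" "r < K"
      show "((\<lambda>t. (w(k := (w k)(l0 := t))) r (fst p) * e u s (fst p) * x s (snd p)) has_real_derivative Pd l0 s r p) (at (w k l0))"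
      proof (cases "r = k \<and> fst p = l0")
        case True
        then show ?thesis unfolding Pd_def by (auto intro!: derivative_eq_intros)
      next
        case False
        then have "(\<lambda>t. (w(k := (w k)(l0 := t))) r (fst p) * e u s (fst p) * x s (snd p)) = (\<lambda>t. w r (fst p) * e u s (fst p) * x s (snd p))"
          by auto
        moreover have "Pd l0 s r p = 0" using False unfolding Pd_def by auto
        ultimately show ?thesis by simp
      qed
    qed
    show ?thesis by (rule DERIV_cong[OF gU_deriv[OF dF dP]]) (simp add: D_def cd_def)
  qed
  have dv: "dW (GU \<Phi> n1 d \<rho>u pu a b) w u k l0 = F0 * (q - 1) * (D l0 (a, b) / gU w u (fst (a, b)) (snd (a, b))
      - (\<Sum>p\<in>I. (gU w u (fst p) (snd p) powr q / (\<Sum>p'\<in>I. gU w u (fst p') (snd p') powr q)) * (D l0 p / gU w u (fst p) (snd p))))" if l0: "l0 < n1" for l0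
  proof -
    have gp: "\<forall>p\<in>I. 0 < gU (w(k := (w k)(l0 := w k l0))) u (fst p) (snd p)" using gU_pos2 by (auto simp: I_def)
    have "((\<lambda>t. \<rho>u * psi (hconj pu) (gU (w(k := (w k)(l0 := t))) u (fst (a, b)) (snd (a, b))) / (\<Sum>p\<in>I. \<bar>psi (hconj pu) (gU (w(k := (w k)(l0 := t))) u (fst p) (snd p))\<bar> powr pu) powr (1/pu))
      has_real_derivative
      (\<rho>u * psi (hconj pu) (gU (w(k := (w k)(l0 := w k l0))) u (fst (a, b)) (snd (a, b))) / (\<Sum>p\<in>I. \<bar>psi (hconj pu) (gU (w(k := (w k)(l0 := w k l0))) u (fst p) (snd p))\<bar> powr pu) powr (1/pu))
      * (hconj pu - 1) * (D l0 (a, b) / gU (w(k := (w k)(l0 := w k l0))) u (fst (a, b)) (snd (a, b)) - (\<Sum>p\<in>I. (gU (w(k := (w k)(l0 := w k l0))) u (fst p) (snd p) powr hconj pu / (\<Sum>p'\<in>I. gU (w(k := (w k)(l0 := w k l0))) u (fst p') (snd p') powr hconj pu)) * (D l0 p / gU (w(k := (w k)(l0 := w k l0))) u (fst p) (snd p))))) (at (w k l0))"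
      by (rule quot_deriv[where g="\<lambda>p t. gU (w(k := (w k)(l0 := t))) u (fst p) (snd p)"]) (use ab pu dg[OF l0] gp in \<open>auto simp: I_def\<close>)
    then have "((\<lambda>t. GU \<Phi> n1 d \<rho>u pu a b (w(k := (w k)(l0 := t))) u) has_real_derivative F0 * (q - 1) * (D l0 (a, b) / gU w u (fst (a, b)) (snd (a, b))
      - (\<Sum>p\<in>I. (gU w u (fst p) (snd p) powr q / (\<Sum>p'\<in>I. gU w u (fst p') (snd p') powr q)) * (D l0 p / gU w u (fst p) (snd p))))) (at (w k l0))"
      unfolding GU_eq[OF K upos a b] F0_def q_def I_def by simp
    then show ?thesis unfolding dW_def by (rule DERIV_imp_deriv)
  qed
  have Db: "\<forall>p\<in>I. (\<Sum>l0\<in>{..<n1}. \<bar>D l0 p\<bar> * w k l0) \<le> (2 * Cw + 1) * gU w u (fst p) (snd p)"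
  proof
    fix p assume p: "p \<in> I"
    have p1: "fst p < n1" and p2: "snd p < d" using p by (auto simp: I_def)
    have cdb: "\<forall>s\<in>{..<n}. \<forall>r\<in>{..<K}. (\<Sum>l0\<in>{..<n1}. \<bar>cd l0 s r\<bar> * w k l0) \<le> 2 * Cw * cc w u s r"
    proof (intro ballI)
      fix s r assume s: "s \<in> {..<n}" and r: "r \<in> {..<K}"
      have Fb: "\<forall>k'<K. (\<Sum>l0\<in>{..<n1}. \<bar>Fd l0 s k'\<bar> * w k l0) \<le> Cw"
      proof (intro allI impI)
        fix k' assume k': "k' < K"
        show "(\<Sum>l0\<in>{..<n1}. \<bar>Fd l0 s k'\<bar> * w k l0) \<le> Cw"
        proof (cases "k' = k")
          case True
          have "(\<Sum>l0\<in>{..<n1}. \<bar>Fd l0 s k'\<bar> * w k l0) = f w u s k"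
            unfolding Fd_def f_def using True by (intro sum.cong) (auto simp: h_nonneg mult.commute)
          then show ?thesis using f_le[OF k] s by simp
        qed (simp add: Fd_def Cw0)
      qed
      show "(\<Sum>l0\<in>{..<n1}. \<bar>cd l0 s r\<bar> * w k l0) \<le> 2 * Cw * cc w u s r"
        unfolding cd_def by (rule cdb_gen[OF _ _ _ _ Fb Cw0]) (use r s wpos k in \<open>auto simp: less_imp_le\<close>)
    qed
    have Pdb: "\<forall>s\<in>{..<n}. \<forall>r\<in>{..<K}. (\<Sum>l0\<in>{..<n1}. \<bar>Pd l0 s r p\<bar> * w k l0) \<le> 1 * (w r (fst p) * e u s (fst p) * x s (snd p))"
    proof (intro ballI)
      fix s r assume s: "s \<in> {..<n}" and r: "r \<in> {..<K}"
      have "(\<Sum>l0\<in>{..<n1}. \<bar>Pd l0 s r p\<bar> * w k l0) = (\<Sum>l0\<in>{..<n1}. if l0 = fst p then (if r = k then \<bar>e u s (fst p) * x s (snd p)\<bar> * w k l0 else 0) else 0)"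
        unfolding Pd_def by (intro sum.cong) auto
      also have "\<dots> = (if r = k then \<bar>e u s (fst p) * x s (snd p)\<bar> * w k (fst p) else 0)" using p1 by simp
      also have "\<dots> \<le> 1 * (w r (fst p) * e u s (fst p) * x s (snd p))"
        using P_nonneg[of r "fst p" "snd p" s] r s p1 p2 e_nonneg[OF p1, of u s] xnn by (auto simp: abs_mult)
      finally show "(\<Sum>l0\<in>{..<n1}. \<bar>Pd l0 s r p\<bar> * w k l0) \<le> 1 * (w r (fst p) * e u s (fst p) * x s (snd p))" .
    qed
    have "(\<Sum>l0\<in>{..<n1}. \<bar>(1 / real n) * (\<Sum>s\<in>{..<n}. \<Sum>r\<in>{..<K}. cd l0 s r * (w r (fst p) * e u s (fst p) * x s (snd p)) + cc w u s r * Pd l0 s r p)\<bar> * w k l0)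
      \<le> (2 * Cw + 1) * ((1 / real n) * (\<Sum>s\<in>{..<n}. \<Sum>r\<in>{..<K}. cc w u s r * (w r (fst p) * e u s (fst p) * x s (snd p))) + \<epsilon>)"
      by (rule g_bound[where Pd="\<lambda>l0 s r. Pd l0 s r p"]) (use wpos k cc_nonneg P_nonneg p1 p2 cdb Pdb Cw0 epos in \<open>auto simp: less_imp_le\<close>)
    then show "(\<Sum>l0\<in>{..<n1}. \<bar>D l0 p\<bar> * w k l0) \<le> (2 * Cw + 1) * gU w u (fst p) (snd p)"
      by (simp add: D_def gU_def)
  qed
  have "(\<Sum>l<n1. \<bar>dW (GU \<Phi> n1 d \<rho>u pu a b) w u k l\<bar> * w k l)
      = (\<Sum>l0\<in>{..<n1}. \<bar>F0 * (q - 1) * (D l0 (a, b) / gU w u (fst (a, b)) (snd (a, b)) - (\<Sum>p\<in>I. (gU w u (fst p) (snd p) powr q / (\<Sum>p'\<in>I. gU w u (fst p') (snd p') powr q)) * (D l0 p / gU w u (fst p) (snd p))))\<bar> * w k l0)"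
    by (intro sum.cong) (auto simp: dv)
  also have "\<dots> \<le> 2 * (q - 1) * (2 * Cw + 1) * F0"
    by (rule quot_bound[where g="\<lambda>p. gU w u (fst p) (snd p)" and j="(a, b)"]) (use ab gU_pos2 GU_nonneg[OF K a b] q1 wpos k Db in \<open>auto simp: F0_def I_def less_imp_le\<close>)
  also have "\<dots> = Amat K pw pu Cw Cu an K k * GU \<Phi> n1 d \<rho>u pu a b w u"
    unfolding Amat_def F0_def q_def using k by simp
  finally show ?thesis .
qed

end

context NN2 begin

lemma ed_prod: assumes r: "r < K" and s: "s < n" and a: "a < n1" and b: "b < d"
  shows "(\<Sum>c\<in>{..<n1}\<times>{..<d}. \<bar>w r a * (if a = fst c then \<alpha> a * ((\<alpha> a - 1) * z u s a powr (\<alpha> a - 2) * x s (snd c)) else 0) * x s b\<bar> * u (fst c) (snd c))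
    = (\<alpha> a - 1) * (w r a * e u s a * x s b)"
proof -
  define E where "E = \<alpha> a * ((\<alpha> a - 1) * z u s a powr (\<alpha> a - 2))"
  have E0: "0 \<le> E" unfolding E_def using \<alpha>1 a by (auto intro!: mult_nonneg_nonneg)
  have w0: "0 \<le> w r a" using wpos r a by (simp add: less_imp_le)
  have x0: "0 \<le> x s b" using xnn s b by simp
  have "(\<Sum>c\<in>{..<n1}\<times>{..<d}. \<bar>w r a * (if a = fst c then \<alpha> a * ((\<alpha> a - 1) * z u s a powr (\<alpha> a - 2) * x s (snd c)) else 0) * x s b\<bar> * u (fst c) (snd c))
    = (\<Sum>l<n1. \<Sum>m<d. \<bar>w r a * (if a = l then \<alpha> a * ((\<alpha> a - 1) * z u s a powr (\<alpha> a - 2) * x s m) else 0) * x s b\<bar> * u l m)"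
    by (rule prod_sum)
  also have "\<dots> = (\<Sum>l<n1. if a = l then (\<Sum>m<d. w r a * x s b * E * (u a m * x s m)) else 0)"
  proof (rule sum.cong[OF refl])
    fix l assume "l \<in> {..<n1}"
    show "(\<Sum>m<d. \<bar>w r a * (if a = l then \<alpha> a * ((\<alpha> a - 1) * z u s a powr (\<alpha> a - 2) * x s m) else 0) * x s b\<bar> * u l m)
      = (if a = l then (\<Sum>m<d. w r a * x s b * E * (u a m * x s m)) else 0)"
    proof (cases "a = l")
      case True
      show ?thesis
      proof -
        have "(\<Sum>m<d. \<bar>w r a * (\<alpha> a * ((\<alpha> a - 1) * z u s a powr (\<alpha> a - 2) * x s m)) * x s b\<bar> * u l m)
           = (\<Sum>m<d. w r a * x s b * E * (u a m * x s m))"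
        proof (rule sum.cong[OF refl])
          fix m assume m: "m \<in> {..<d}"
          have "w r a * (\<alpha> a * ((\<alpha> a - 1) * z u s a powr (\<alpha> a - 2) * x s m)) * x s b = w r a * x s b * E * x s m"
            unfolding E_def by (simp add: mult_ac)
          moreover have "0 \<le> w r a * x s b * E * x s m" using w0 x0 E0 xnn s m by simp
          ultimately have "\<bar>w r a * (\<alpha> a * ((\<alpha> a - 1) * z u s a powr (\<alpha> a - 2) * x s m)) * x s b\<bar> = w r a * x s b * E * x s m"
            by (simp only: abs_of_nonneg)
          then show "\<bar>w r a * (\<alpha> a * ((\<alpha> a - 1) * z u s a powr (\<alpha> a - 2) * x s m)) * x s b\<bar> * u l m = w r a * x s b * E * (u a m * x s m)"
            using True by (simp add: mult_ac)
        qed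
        then show ?thesis using True by simp
      qed
    qed simp
  qed
  also have "\<dots> = w r a * x s b * E * z u s a" using a unfolding z_def by (simp add: sum_distrib_left)
  also have "\<dots> = w r a * x s b * (\<alpha> a * ((\<alpha> a - 1) * z u s a powr (\<alpha> a - 2)) * z u s a)" unfolding E_def by (simp add: mult_ac)
  also have "\<dots> = (\<alpha> a - 1) * (w r a * e u s a * x s b)" using ed_z[OF s a] by (simp add: mult_ac)
  finally show ?thesis .
qed

lemma part4:
  assumes K: "0 < K" and a: "a < n1" and b: "b < d"
  shows "(\<Sum>l<n1. \<Sum>m<d. \<bar>dU (GU \<Phi> n1 d \<rho>u pu a b) w u l m\<bar> * u l m) \<le> Amat K pw pu Cw Cu an K K * GU \<Phi> n1 d \<rho>u pu a b w u"
proof -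
  define q where "q = hconj pu"
  have q1: "1 < q" unfolding q_def using hconj_facts[OF pu] by simp
  define I where "I = {..<n1}\<times>{..<d}"
  have ab: "(a, b) \<in> I" using a b by (simp add: I_def)
  define F0 where "F0 = GU \<Phi> n1 d \<rho>u pu a b w u"
  define Fd where "Fd c s r = w r (fst c) * (e u s (fst c) * x s (snd c))" for c :: "nat \<times> nat" and s r
  define Ed where "Ed c s a' = (if a' = fst c then \<alpha> a' * ((\<alpha> a' - 1) * z u s a' powr (\<alpha> a' - 2) * x s (snd c)) else 0)" for c :: "nat \<times> nat" and s a'
  define Pd where "Pd c s r p = w r (fst p) * Ed c s (fst p) * x s (snd p)" for c :: "nat \<times> nat" and s r and p :: "nat \<times> nat"
  define cd where "cd c s r = - (sm w u s r * (Fd c s r - (\<Sum>k'<K. sm w u s k' * Fd c s k')))" for c s r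
  define D where "D c p = (1 / real n) * (\<Sum>s<n. \<Sum>r<K. cd c s r * (w r (fst p) * e u s (fst p) * x s (snd p)) + cc w u s r * Pd c s r p)" for c p
  have dg: "((\<lambda>t. gU w (u(l0 := (u l0)(m0 := t))) (fst p) (snd p)) has_real_derivative D (l0, m0) p) (at (u l0 m0))"
    if l0: "l0 < n1" and m0: "m0 < d" for l0 m0 p
  proof -
    have dF: "\<forall>s<n. \<forall>r<K. ((\<lambda>t. f w (u(l0 := (u l0)(m0 := t))) s r) has_real_derivative Fd (l0, m0) s r) (at (u l0 m0))"
      unfolding Fd_def by (intro allI impI) (simp add: f_udir_deriv[OF upos _ l0 m0])
    have dP: "\<forall>s<n. \<forall>r<K. ((\<lambda>t. w r (fst p) * e (u(l0 := (u l0)(m0 := t))) s (fst p) * x s (snd p)) has_real_derivative Pd (l0, m0) s r p) (at (u l0 m0))"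
    proof (intro allI impI)
      fix s r assume s: "s < n" and "r < K"
      have "((\<lambda>t. e (u(l0 := (u l0)(m0 := t))) s (fst p)) has_real_derivative Ed (l0, m0) s (fst p)) (at (u l0 m0))"
        unfolding Ed_def fst_conv snd_conv by (rule e_udir_deriv[OF upos s l0 m0])
      from DERIV_cmult[OF DERIV_cmult[OF this, of "w r (fst p)"], of "x s (snd p)"]
      show "((\<lambda>t. w r (fst p) * e (u(l0 := (u l0)(m0 := t))) s (fst p) * x s (snd p)) has_real_derivative Pd (l0, m0) s r p) (at (u l0 m0))"
        unfolding Pd_def by (simp add: mult_ac)
    qed
    show ?thesis by (rule DERIV_cong[OF gU_deriv[OF dF dP]]) (simp add: D_def cd_def)
  qed
  have dv: "dU (GU \<Phi> n1 d \<rho>u pu a b) w u l0 m0 = F0 * (q - 1) * (D (l0, m0) (a, b) / gU w u (fst (a, b)) (snd (a, b))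
      - (\<Sum>p\<in>I. (gU w u (fst p) (snd p) powr q / (\<Sum>p'\<in>I. gU w u (fst p') (snd p') powr q)) * (D (l0, m0) p / gU w u (fst p) (snd p))))"
    if l0: "l0 < n1" and m0: "m0 < d" for l0 m0
  proof -
    have gp: "\<forall>p\<in>I. 0 < gU w (u(l0 := (u l0)(m0 := u l0 m0))) (fst p) (snd p)" using gU_pos2 by (auto simp: I_def)
    have QD: "((\<lambda>t. \<rho>u * psi (hconj pu) (gU w (u(l0 := (u l0)(m0 := t))) (fst (a, b)) (snd (a, b))) / (\<Sum>p\<in>I. \<bar>psi (hconj pu) (gU w (u(l0 := (u l0)(m0 := t))) (fst p) (snd p))\<bar> powr pu) powr (1/pu))
      has_real_derivative
      (\<rho>u * psi (hconj pu) (gU w (u(l0 := (u l0)(m0 := u l0 m0))) (fst (a, b)) (snd (a, b))) / (\<Sum>p\<in>I. \<bar>psi (hconj pu) (gU w (u(l0 := (u l0)(m0 := u l0 m0))) (fst p) (snd p))\<bar> powr pu) powr (1/pu))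
      * (hconj pu - 1) * (D (l0, m0) (a, b) / gU w (u(l0 := (u l0)(m0 := u l0 m0))) (fst (a, b)) (snd (a, b)) - (\<Sum>p\<in>I. (gU w (u(l0 := (u l0)(m0 := u l0 m0))) (fst p) (snd p) powr hconj pu / (\<Sum>p'\<in>I. gU w (u(l0 := (u l0)(m0 := u l0 m0))) (fst p') (snd p') powr hconj pu)) * (D (l0, m0) p / gU w (u(l0 := (u l0)(m0 := u l0 m0))) (fst p) (snd p))))) (at (u l0 m0))"
      by (rule quot_deriv[where g="\<lambda>p t. gU w (u(l0 := (u l0)(m0 := t))) (fst p) (snd p)"]) (use ab pu dg[OF l0 m0] gp in \<open>auto simp: I_def\<close>)
    have u0: "0 < u l0 m0" using upos l0 m0 by (simp add: pos_def)
    have evp: "eventually (\<lambda>t. t \<in> {0<..}) (nhds (u l0 m0))"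
      by (rule eventually_nhds_in_open) (use u0 in auto)
    have ev: "eventually (\<lambda>t::real. GU \<Phi> n1 d \<rho>u pu a b w (u(l0 := (u l0)(m0 := t))) =
        \<rho>u * psi (hconj pu) (gU w (u(l0 := (u l0)(m0 := t))) (fst (a, b)) (snd (a, b))) / (\<Sum>p\<in>I. \<bar>psi (hconj pu) (gU w (u(l0 := (u l0)(m0 := t))) (fst p) (snd p))\<bar> powr pu) powr (1/pu)) (nhds (u l0 m0))"
    proof (rule eventually_mono[OF evp])
      fix t :: real assume "t \<in> {0<..}"
      then have "pos (u(l0 := (u l0)(m0 := t)))" using upos by (auto simp: pos_def)
      then show "GU \<Phi> n1 d \<rho>u pu a b w (u(l0 := (u l0)(m0 := t))) =
        \<rho>u * psi (hconj pu) (gU w (u(l0 := (u l0)(m0 := t))) (fst (a, b)) (snd (a, b))) / (\<Sum>p\<in>I. \<bar>psi (hconj pu) (gU w (u(l0 := (u l0)(m0 := t))) (fst p) (snd p))\<bar> powr pu) powr (1/pu)"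
        unfolding I_def by (simp add: GU_eq[OF K _ a b])
    qed
    have "dU (GU \<Phi> n1 d \<rho>u pu a b) w u l0 m0 = deriv (\<lambda>t. \<rho>u * psi (hconj pu) (gU w (u(l0 := (u l0)(m0 := t))) (fst (a, b)) (snd (a, b))) / (\<Sum>p\<in>I. \<bar>psi (hconj pu) (gU w (u(l0 := (u l0)(m0 := t))) (fst p) (snd p))\<bar> powr pu) powr (1/pu)) (u l0 m0)"
      unfolding dU_def by (rule deriv_cong_ev[OF ev refl])
    also have "\<dots> = F0 * (q - 1) * (D (l0, m0) (a, b) / gU w u (fst (a, b)) (snd (a, b))
      - (\<Sum>p\<in>I. (gU w u (fst p) (snd p) powr q / (\<Sum>p'\<in>I. gU w u (fst p') (snd p') powr q)) * (D (l0, m0) p / gU w u (fst p) (snd p))))"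
      using DERIV_imp_deriv[OF QD] unfolding F0_def q_def GU_eq[OF K upos a b] I_def by simp
    finally show ?thesis .
  qed
  have an1: "1 \<le> an" using an_ge[of 0] \<alpha>1 a by force
  have Db: "\<forall>p\<in>I. (\<Sum>c\<in>I. \<bar>D c p\<bar> * u (fst c) (snd c)) \<le> (2 * Cu + (an - 1)) * gU w u (fst p) (snd p)"
  proof
    fix p assume p: "p \<in> I"
    have p1: "fst p < n1" and p2: "snd p < d" using p by (auto simp: I_def)
    have cdb: "\<forall>s\<in>{..<n}. \<forall>r\<in>{..<K}. (\<Sum>c\<in>I. \<bar>cd c s r\<bar> * u (fst c) (snd c)) \<le> 2 * Cu * cc w u s r"
    proof (intro ballI)
      fix s r assume s: "s \<in> {..<n}" and r: "r \<in> {..<K}"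
      have Fb: "\<forall>k'<K. (\<Sum>c\<in>I. \<bar>Fd c s k'\<bar> * u (fst c) (snd c)) \<le> Cu"
        unfolding Fd_def I_def using phi_prod phi_le s by auto
      show "(\<Sum>c\<in>I. \<bar>cd c s r\<bar> * u (fst c) (snd c)) \<le> 2 * Cu * cc w u s r"
        unfolding cd_def by (rule cdb_gen[OF _ _ _ _ Fb Cu0]) (use r s upos in \<open>auto simp: I_def pos_def less_imp_le\<close>)
    qed
    have Pdb: "\<forall>s\<in>{..<n}. \<forall>r\<in>{..<K}. (\<Sum>c\<in>I. \<bar>Pd c s r p\<bar> * u (fst c) (snd c)) \<le> (an - 1) * (w r (fst p) * e u s (fst p) * x s (snd p))"
    proof (intro ballI)
      fix s r assume s: "s \<in> {..<n}" and r: "r \<in> {..<K}"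
      have "(\<Sum>c\<in>I. \<bar>Pd c s r p\<bar> * u (fst c) (snd c)) = (\<alpha> (fst p) - 1) * (w r (fst p) * e u s (fst p) * x s (snd p))"
      proof -
        have rK: "r < K" and sn: "s < n" using r s by auto
        show ?thesis unfolding Pd_def Ed_def I_def by (rule ed_prod[OF rK sn p1 p2])
      qed
      also have "\<dots> \<le> (an - 1) * (w r (fst p) * e u s (fst p) * x s (snd p))"
        using an_ge[OF p1] P_nonneg[of r "fst p" "snd p" s] r s p1 p2 by (intro mult_right_mono) auto
      finally show "(\<Sum>c\<in>I. \<bar>Pd c s r p\<bar> * u (fst c) (snd c)) \<le> (an - 1) * (w r (fst p) * e u s (fst p) * x s (snd p))" .
    qed
    have "(\<Sum>c\<in>I. \<bar>(1 / real n) * (\<Sum>s\<in>{..<n}. \<Sum>r\<in>{..<K}. cd c s r * (w r (fst p) * e u s (fst p) * x s (snd p)) + cc w u s r * Pd c s r p)\<bar> * u (fst c) (snd c))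
      \<le> (2 * Cu + (an - 1)) * ((1 / real n) * (\<Sum>s\<in>{..<n}. \<Sum>r\<in>{..<K}. cc w u s r * (w r (fst p) * e u s (fst p) * x s (snd p))) + \<epsilon>)"
      by (rule g_bound[where Pd="\<lambda>c s r. Pd c s r p"]) (use upos cc_nonneg P_nonneg p1 p2 cdb Pdb Cu0 an1 epos in \<open>auto simp: I_def pos_def less_imp_le\<close>)
    then show "(\<Sum>c\<in>I. \<bar>D c p\<bar> * u (fst c) (snd c)) \<le> (2 * Cu + (an - 1)) * gU w u (fst p) (snd p)"
      by (simp add: D_def gU_def)
  qed
  have "(\<Sum>l<n1. \<Sum>m<d. \<bar>dU (GU \<Phi> n1 d \<rho>u pu a b) w u l m\<bar> * u l m)
      = (\<Sum>c\<in>I. \<bar>dU (GU \<Phi> n1 d \<rho>u pu a b) w u (fst c) (snd c)\<bar> * u (fst c) (snd c))"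
    unfolding I_def by (rule prod_sum[symmetric])
  also have "\<dots> = (\<Sum>c\<in>I. \<bar>F0 * (q - 1) * (D c (a, b) / gU w u (fst (a, b)) (snd (a, b)) - (\<Sum>p\<in>I. (gU w u (fst p) (snd p) powr q / (\<Sum>p'\<in>I. gU w u (fst p') (snd p') powr q)) * (D c p / gU w u (fst p) (snd p))))\<bar> * u (fst c) (snd c))"
    by (intro sum.cong) (auto simp: dv I_def)
  also have "\<dots> \<le> 2 * (q - 1) * (2 * Cu + (an - 1)) * F0"
    by (rule quot_bound[where g="\<lambda>p. gU w u (fst p) (snd p)" and j="(a, b)"]) (use ab gU_pos2 GU_nonneg[OF K a b] q1 upos Db in \<open>auto simp: F0_def I_def pos_def less_imp_le\<close>)
  also have "\<dots> = Amat K pw pu Cw Cu an K K * GU \<Phi> n1 d \<rho>u pu a b w u"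
    unfolding Amat_def F0_def q_def by simp
  finally show ?thesis .
qed

end

lemma main_aux:
  fixes K n1 d n :: nat
    and x :: "nat \<Rightarrow> nat \<Rightarrow> real" and y :: "nat \<Rightarrow> nat"
    and \<alpha> :: "nat \<Rightarrow> real" and \<epsilon> pw pu \<rho>w \<rho>u :: real
    and w u :: "nat \<Rightarrow> nat \<Rightarrow> real"
  assumes "0 < n" "0 < n1" "0 < d"
    and "\<forall>i<n. \<forall>m<d. 0 \<le> x i m"
    and "\<forall>i<n. y i < K"
    and "\<forall>l<n1. 1 \<le> \<alpha> l"
    and "0 < \<epsilon>"
    and "1 < pw" "1 < pu" "0 < \<rho>w" "0 < \<rho>u"
    and "(w, u) \<in> Bpp K n1 d pw pu \<rho>w \<rho>u"
  shows "\<forall>i<K. \<forall>k<K. \<forall>j<n1. \<forall>a<n1. \<forall>b<d.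
     (\<Sum>l<n1. \<bar>dW (GW (PhiObj K n1 d n x y \<alpha> \<epsilon>) n1 \<rho>w pw i j) w u k l\<bar> * w k l)
        \<le> Amat K pw pu (\<rho>w * PsiA n1 \<alpha> (hconj pw) pu (\<lambda>_. 1) (\<rho>u * rhoX n d x pu)) (\<rho>w * PsiA n1 \<alpha> (hconj pw) pu \<alpha> (\<rho>u * rhoX n d x pu)) (Max ((\<lambda>l. \<bar>\<alpha> l\<bar>) ` {..<n1})) i k * GW (PhiObj K n1 d n x y \<alpha> \<epsilon>) n1 \<rho>w pw i j w u \<and>
     (\<Sum>l<n1. \<Sum>m<d. \<bar>dU (GW (PhiObj K n1 d n x y \<alpha> \<epsilon>) n1 \<rho>w pw i j) w u l m\<bar> * u l m)
        \<le> Amat K pw pu (\<rho>w * PsiA n1 \<alpha> (hconj pw) pu (\<lambda>_. 1) (\<rho>u * rhoX n d x pu)) (\<rho>w * PsiA n1 \<alpha> (hconj pw) pu \<alpha> (\<rho>u * rhoX n d x pu)) (Max ((\<lambda>l. \<bar>\<alpha> l\<bar>) ` {..<n1})) i K * GW (PhiObj K n1 d n x y \<alpha> \<epsilon>) n1 \<rho>w pw i j w u \<and>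
     (\<Sum>l<n1. \<bar>dW (GU (PhiObj K n1 d n x y \<alpha> \<epsilon>) n1 d \<rho>u pu a b) w u k l\<bar> * w k l)
        \<le> Amat K pw pu (\<rho>w * PsiA n1 \<alpha> (hconj pw) pu (\<lambda>_. 1) (\<rho>u * rhoX n d x pu)) (\<rho>w * PsiA n1 \<alpha> (hconj pw) pu \<alpha> (\<rho>u * rhoX n d x pu)) (Max ((\<lambda>l. \<bar>\<alpha> l\<bar>) ` {..<n1})) K k * GU (PhiObj K n1 d n x y \<alpha> \<epsilon>) n1 d \<rho>u pu a b w u \<and>
     (\<Sum>l<n1. \<Sum>m<d. \<bar>dU (GU (PhiObj K n1 d n x y \<alpha> \<epsilon>) n1 d \<rho>u pu a b) w u l m\<bar> * u l m)
        \<le> Amat K pw pu (\<rho>w * PsiA n1 \<alpha> (hconj pw) pu (\<lambda>_. 1) (\<rho>u * rhoX n d x pu)) (\<rho>w * PsiA n1 \<alpha> (hconj pw) pu \<alpha> (\<rho>u * rhoX n d x pu)) (Max ((\<lambda>l. \<bar>\<alpha> l\<bar>) ` {..<n1})) K K * GU (PhiObj K n1 d n x y \<alpha> \<epsilon>) n1 d \<rho>u pu a b w u"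
proof -
  interpret N: NN2 K n1 d n x y \<alpha> \<epsilon> pw pu \<rho>w \<rho>u w u
    by unfold_locales (use assms in auto)
  show ?thesis
    using N.part1 N.part2 N.part3 N.part4 unfolding N.Cw_def N.Cu_def N.an_def by auto
qed

theorem mainTheorem12:
  fixes K n1 d n :: nat
    and x :: "nat \<Rightarrow> nat \<Rightarrow> real" and y :: "nat \<Rightarrow> nat"
    and \<alpha> :: "nat \<Rightarrow> real" and \<epsilon> pw pu \<rho>w \<rho>u :: real
    and w u :: "nat \<Rightarrow> nat \<Rightarrow> real"
  assumes "0 < n" "0 < n1" "0 < d"
    and "\<forall>i<n. \<forall>m<d. 0 \<le> x i m"
    and "\<forall>i<n. y i < K"
    and "\<forall>l<n1. 1 \<le> \<alpha> l"
    and "0 < \<epsilon>"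
    and "1 < pw" "1 < pu" "0 < \<rho>w" "0 < \<rho>u"
    and "(w, u) \<in> Bpp K n1 d pw pu \<rho>w \<rho>u"
  defines "\<Phi> \<equiv> PhiObj K n1 d n x y \<alpha> \<epsilon>"
    and "Cw \<equiv> \<rho>w * PsiA n1 \<alpha> (hconj pw) pu (\<lambda>_. 1) (\<rho>u * rhoX n d x pu)"
    and "Cu \<equiv> \<rho>w * PsiA n1 \<alpha> (hconj pw) pu \<alpha> (\<rho>u * rhoX n d x pu)"
    and "an \<equiv> Max ((\<lambda>l. \<bar>\<alpha> l\<bar>) ` {..<n1})"
  shows "\<forall>i<K. \<forall>k<K. \<forall>j<n1. \<forall>a<n1. \<forall>b<d.
     (\<Sum>l<n1. \<bar>dW (GW \<Phi> n1 \<rho>w pw i j) w u k l\<bar> * w k l)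
        \<le> Amat K pw pu Cw Cu an i k * GW \<Phi> n1 \<rho>w pw i j w u \<and>
     (\<Sum>l<n1. \<Sum>m<d. \<bar>dU (GW \<Phi> n1 \<rho>w pw i j) w u l m\<bar> * u l m)
        \<le> Amat K pw pu Cw Cu an i K * GW \<Phi> n1 \<rho>w pw i j w u \<and>
     (\<Sum>l<n1. \<bar>dW (GU \<Phi> n1 d \<rho>u pu a b) w u k l\<bar> * w k l)
        \<le> Amat K pw pu Cw Cu an K k * GU \<Phi> n1 d \<rho>u pu a b w u \<and>
     (\<Sum>l<n1. \<Sum>m<d. \<bar>dU (GU \<Phi> n1 d \<rho>u pu a b) w u l m\<bar> * u l m)
        \<le> Amat K pw pu Cw Cu an K K * GU \<Phi> n1 d \<rho>u pu a b w u"
  unfolding \<Phi>_def Cw_def Cu_def an_def by (rule main_aux[OF assms(1-12)])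

end
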